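(* There are absolute constants $c_1,c_2>0$ such that for every integer $k\ge2$ there are infinitely many $n$ for which some sequence $S_k\in[n]^n$ satisfies all of: - ${\mathit LF}^{k-1}(S_k)\ge c_1\frac nk\log_2(n/k)$; - ${\mathit LF}^k(S_k)\le c_2 n$; - $S_k$ avoids the pattern $(k+1,k,\dots,1)$; - $\mathrm{OPT}(S_k)\le c_2 n$.
   Context: For a BST $T$, $d_T(a,b)$ is the number of edges on the path between $a$ and $b$. $q$-lazy finger bound, for $q\ge1$: for a BST $T$ on $[n]$ and $S=(s_1,\dots,s_m)$, a finger strategy consists of initial positions $\vec\ell\in[n]^q$ and assignments $\vec f\in[q]^m$, where finger $f_t$ serves $s_t$ and then sits at $s_t$. The cost is $\sum_t(1+d_T(s_t,\sigma(f_t,t)))$, where $\sigma(i,t)$ is the position of finger $i$ just before time $t$. ${\mathit LF}^q_T(S)$ is the minimum over strategies, and ${\mathit LF}^q(S)=\min_T{\mathit LF}^q_T(S)$ over BSTs $T$ on $[n]$. A sequence avoids a pattern $\pi$ of length $r$ if no subsequence $x_{i_1},\dots,x_{i_r}$ ($i_1<\dots<i_r$) satisfies $x_{i_a}<x_{i_b}\iff\pi(a)<\pi(b)$. Dynamic BST model: an algorithm chooses an initial BST on $[n]$. To serve each access it touches a connected set of nodes containing the root and the accessed key, may rearrange them into any BST shape, and pays the number of touched nodes. $\mathrm{OPT}(S)$ is the minimum total cost over all offline algorithms. *)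

theory Defs
  imports Complex_Main "HOL-Library.Tree"
begin

definition bst_on :: "nat \<Rightarrow> nat tree \<Rightarrow> bool" where
  "bst_on n T \<longleftrightarrow> bst T \<and> set_tree T = {1..n}"

fun path :: "nat tree \<Rightarrow> nat \<Rightarrow> nat list" where
  "path Leaf a = []"
| "path (Node l x r) a = x # (if a < x then path l a else if x < a then path r a else [])"

fun lcp :: "nat list \<Rightarrow> nat list \<Rightarrow> nat" where
  "lcp (x # xs) (y # ys) = (if x = y then Suc (lcp xs ys) else 0)"
| "lcp _ _ = 0"

(* d_T(a,b): number of edges between a and b  (depth a + depth b - 2 depth(lca)) *)
definition dist_T :: "nat tree \<Rightarrow> nat \<Rightarrow> nat \<Rightarrow> nat" where
  "dist_T T a b = length (path T a) + length (path T b) - 2 * lcp (path T a) (path T b)"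

(* cost of a finger strategy: pos = current finger positions (list indexed by finger 0..q-1),
   F = finger assignments, S = access sequence *)
fun finger_cost :: "nat tree \<Rightarrow> nat list \<Rightarrow> nat list \<Rightarrow> nat list \<Rightarrow> nat" where
  "finger_cost T pos (f # F) (s # S) = 1 + dist_T T s (pos ! f) + finger_cost T (pos[f := s]) F S"
| "finger_cost T pos _ _ = 0"

definition LF_T :: "nat \<Rightarrow> nat tree \<Rightarrow> nat list \<Rightarrow> nat" where
  "LF_T q T S = Inf {finger_cost T l F S | l F.
      length l = q \<and> set l \<subseteq> set_tree T \<and> length F = length S \<and> set F \<subseteq> {..<q}}"

definition LF :: "nat \<Rightarrow> nat \<Rightarrow> nat list \<Rightarrow> nat" where
  "LF q n S = Inf {LF_T q T S | T. bst_on n T}"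

definition contains_pattern :: "nat list \<Rightarrow> nat list \<Rightarrow> bool" where
  "contains_pattern xs pat \<longleftrightarrow> (\<exists>is. length is = length pat \<and> sorted_wrt (<) is \<and>
      (\<forall>i\<in>set is. i < length xs) \<and>
      (\<forall>a<length pat. \<forall>b<length pat. xs ! (is ! a) < xs ! (is ! b) \<longleftrightarrow> pat ! a < pat ! b))"

definition avoids :: "nat list \<Rightarrow> nat list \<Rightarrow> bool" where
  "avoids xs pat \<longleftrightarrow> \<not> contains_pattern xs pat"

fun subtree_at :: "nat tree \<Rightarrow> nat \<Rightarrow> nat tree" where
  "subtree_at Leaf x = Leaf"
| "subtree_at (Node l y r) x = (if x < y then subtree_at l x else if y < x then subtree_at r x else Node l y r)"

(* One step of the dynamic BST model: touch a connected set P containing the root and s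
   (equivalently: P contains s and is closed under taking ancestors), rearrange it into any
   BST shape; the untouched subtrees hang off unchanged. *)
definition valid_step :: "nat tree \<Rightarrow> nat \<Rightarrow> nat set \<Rightarrow> nat tree \<Rightarrow> bool" where
  "valid_step T s P T' \<longleftrightarrow> s \<in> P \<and> P \<subseteq> set_tree T \<and> (\<forall>x\<in>P. set (path T x) \<subseteq> P) \<and>
      bst T' \<and> set_tree T' = set_tree T \<and> (\<forall>x \<in> set_tree T - P. subtree_at T' x = subtree_at T x)"

fun valid_exec :: "nat tree \<Rightarrow> nat list \<Rightarrow> (nat set \<times> nat tree) list \<Rightarrow> bool" where
  "valid_exec T [] [] = True"
| "valid_exec T (s # S) ((P, T') # R) = (valid_step T s P T' \<and> valid_exec T' S R)"
| "valid_exec T _ _ = False"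

definition exec_cost :: "(nat set \<times> nat tree) list \<Rightarrow> nat" where
  "exec_cost R = (\<Sum>(P, _) \<leftarrow> R. card P)"

definition OPT :: "nat \<Rightarrow> nat list \<Rightarrow> nat" where
  "OPT n S = Inf {exec_cost R | T0 R. bst_on n T0 \<and> valid_exec T0 S R}"

end

theory Submission
  imports Defs
begin


lemma lcp_sym: "lcp xs ys = lcp ys xs"
  by (induction xs ys rule: lcp.induct) auto

lemma lcp_le1: "lcp xs ys \<le> length xs"
  by (induction xs ys rule: lcp.induct) auto
lemma lcp_le2: "lcp xs ys \<le> length ys"
  by (induction xs ys rule: lcp.induct) auto

lemma dist_sym: "dist_T T a b = dist_T T b a"
  unfolding dist_T_def by (simp add: lcp_sym add.commute)

lemma set_tree_lt_left: "bst (Node l a r) \<Longrightarrow> x \<in> set_tree l \<Longrightarrow> x < a" by auto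
lemma set_tree_gt_right: "bst (Node l a r) \<Longrightarrow> x \<in> set_tree r \<Longrightarrow> a < x" by auto

lemma path_left: "x < a \<Longrightarrow> path (Node l a r) x = a # path l x" by simp
lemma path_right: "a < x \<Longrightarrow> path (Node l a r) x = a # path r x" by simp
lemma path_root: "path (Node l a r) a = [a]" by simp


lemma path_hd: "t = Node l b r \<Longrightarrow> \<exists>ps. path t x = b # ps" by auto

definition cpair :: "nat tree \<Rightarrow> nat \<Rightarrow> nat \<Rightarrow> nat" where
  "cpair t x y = (if x \<in> set_tree t \<and> y \<in> set_tree t then dist_T t x y
     else if x \<in> set_tree t then length (path t x)
     else if y \<in> set_tree t then length (path t y) else 0)"

lemma cpair_Leaf[simp]: "cpair Leaf x y = 0" by (simp add: cpair_def)

lemma dist_both_left: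
  assumes "x < a" "y < a" shows "dist_T (Node l a r) x y = dist_T l x y"
  using assms unfolding dist_T_def by simp

lemma dist_both_right:
  assumes "a < x" "a < y" shows "dist_T (Node l a r) x y = dist_T r x y"
  using assms unfolding dist_T_def by simp

lemma dist_lr:
  assumes "bst (Node l a r)" "x \<in> set_tree l" "y \<in> set_tree r"
  shows "dist_T (Node l a r) x y = length (path l x) + length (path r y)"
proof -
  obtain l1 b l2 where l: "l = Node l1 b l2" using assms(2) by (cases l) auto
  obtain r1 c r2 where r: "r = Node r1 c r2" using assms(3) by (cases r) auto
  have "b < a" "a < c" using assms l r by auto
  obtain p where p: "path l x = b # p" using l by auto
  obtain q where q: "path r y = c # q" using r by auto
  have "x < a" "a < y" using assms by auto
  thus ?thesis unfolding dist_T_def using p q \<open>b<a\<close> \<open>a<c\<close> by simp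
qed

lemma dist_root_right:
  assumes "a < y" shows "dist_T (Node l a r) a y = length (path r y)"
  using assms unfolding dist_T_def by simp

lemma dist_left_root:
  assumes "x < a" shows "dist_T (Node l a r) x a = length (path l x)"
  using assms unfolding dist_T_def by simp

lemma cpair_Node:
  assumes bst: "bst (Node l a r)" and xy: "x < y"
  shows "cpair (Node l a r) x y = cpair l x y + cpair r x y +
     (if (x \<in> set_tree (Node l a r)) \<noteq> (y \<in> set_tree (Node l a r)) then 1 else 0)"
proof -
  have L: "\<And>z. z \<in> set_tree l \<Longrightarrow> z < a" and R: "\<And>z. z \<in> set_tree r \<Longrightarrow> a < z"
    using bst by auto
  have nl: "\<And>z. z \<in> set_tree l \<Longrightarrow> z \<notin> set_tree r" using L R by force
  show ?thesis
  proof (cases "x \<in> set_tree l")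
    case xl: True
    show ?thesis
    proof (cases "y \<in> set_tree l")
      case True thus ?thesis using xl L nl dist_both_left[of x a y l r] by (auto simp: cpair_def)
    next
      case yl: False
      show ?thesis
      proof (cases "y \<in> set_tree r")
        case True thus ?thesis using xl yl L nl dist_lr[OF bst xl True] by (auto simp: cpair_def)
      next
        case yr: False
        show ?thesis
        proof (cases "y = a")
          case True thus ?thesis using xl yl yr L nl dist_left_root[of x a l r] by (auto simp: cpair_def)
        next
          case False thus ?thesis using xl yl yr L nl by (auto simp: cpair_def)
        qed
      qed
    qed
  next
    case xl: False
    show ?thesis
    proof (cases "x = a")
      case xa: True
      have yl: "y \<notin> set_tree l" using L xy xa by force
      have ar: "a \<notin> set_tree r" "y \<noteq> a" using R xy xa by auto
      show ?thesis
      proof (cases "y \<in> set_tree r")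
        case True thus ?thesis using xl xa yl ar dist_root_right[of a y l r] R by (auto simp: cpair_def)
      next
        case False thus ?thesis using xl xa yl ar by (auto simp: cpair_def)
      qed
    next
      case xa: False
      show ?thesis
      proof (cases "x \<in> set_tree r")
        case xr: True
        have yr: "y \<in> set_tree r \<or> y \<notin> set_tree (Node l a r)" using xr R L xy by force
        show ?thesis
        proof (cases "y \<in> set_tree r")
          case True thus ?thesis using xr xl xa R dist_both_right[of a x y l r] nl by (auto simp: cpair_def)
        next
          case False
          have "a < x" using R xr by auto
          hence p: "path (Node l a r) x = a # path r x" by simp
          have y2: "y \<notin> set_tree (Node l a r)" using False yr by auto
          have "cpair (Node l a r) x y = length (path (Node l a r) x)"
            using xr y2 by (simp add: cpair_def)
          moreover have "cpair l x y = 0" using xl False yr y2 by (auto simp: cpair_def)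
          moreover have "cpair r x y = length (path r x)" using xr False by (simp add: cpair_def)
          ultimately show ?thesis using p xr y2 by simp
        qed
      next
        case xr: False
        show ?thesis
        proof (cases "y \<in> set_tree l")
          case True thus ?thesis using xl xa xr L nl by (auto simp: cpair_def)
        next
          case yl: False
          show ?thesis
          proof (cases "y \<in> set_tree r")
            case True
            have "a < y" using R True by auto
            hence "\<not> y < a" "y \<noteq> a" by simp_all
            thus ?thesis using True xl xa xr yl \<open>a < y\<close> by (auto simp: cpair_def)
          next
            case False thus ?thesis using xl xa xr yl by (auto simp: cpair_def)
          qed
        qed
      qed
    qed
  qed
qed


definition gg :: "nat \<Rightarrow> real" where "gg s = real s / 2 * ln (real s)"

lemma gg_nonneg: "0 \<le> gg s"
  unfolding gg_def by (cases "s = 0") auto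

lemma gg0[simp]: "gg 0 = 0" by (simp add: gg_def)
lemma gg1[simp]: "gg 1 = 0" by (simp add: gg_def)

lemma xlnx_ineq:
  assumes "a > 0" "u > 0" shows "(a::real) * (ln a - ln u) \<ge> a - u"
proof -
  have "ln (u/a) \<le> u/a - 1" using assms by (intro ln_le_minus_one) auto
  hence "ln u - ln a \<le> u/a - 1" using assms by (simp add: ln_div)
  hence "a * (ln u - ln a) \<le> a * (u/a - 1)" using assms by (intro mult_left_mono) auto
  thus ?thesis using assms by (simp add: algebra_simps)
qed

lemma gg_jensen: "gg a + gg b \<ge> gg (a + b) - real (a + b) / 2"
proof (cases "a = 0 \<or> b = 0")
  case True thus ?thesis using gg_nonneg by (auto simp: gg_def)
next
  case False
  hence a: "real a > 0" and b: "real b > 0" by auto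
  let ?u = "real a + real b"
  have "real a * (ln (real a) - ln ?u) \<ge> real a - ?u" using xlnx_ineq[of "real a" ?u] a b by linarith
  moreover have "real b * (ln (real b) - ln ?u) \<ge> real b - ?u" using xlnx_ineq[of "real b" ?u] a b by linarith
  ultimately have "real a * ln (real a) + real b * ln (real b) \<ge> ?u * ln ?u - ?u"
    by (simp add: algebra_simps)
  thus ?thesis unfolding gg_def by (simp add: algebra_simps add_divide_distrib)
qed

lemma gg_step: assumes "s \<ge> 1" shows "gg s \<le> gg (s - 1) + (real s + 1) / 2"
proof (cases "s = 1")
  case True thus ?thesis by (simp add: gg_def)
next
  case False
  hence s2: "s \<ge> 2" using assms by auto
  define t where "t = real s - 1"
  have t: "t \<ge> 1" "real (s - 1) = t" using s2 by (auto simp: t_def of_nat_diff)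
  have "ln (real s) - ln t \<le> real s / t - 1"
  proof -
    have "ln (real s / t) \<le> real s / t - 1" using t by (intro ln_le_minus_one) auto
    thus ?thesis using t s2 by (simp add: ln_div)
  qed
  also have "real s / t - 1 = 1 / t" using t by (simp add: t_def field_simps)
  finally have d: "ln (real s) - ln t \<le> 1 / t" .
  have "t * (ln (real s) - ln t) \<le> t * (1 / t)" using d t by (intro mult_left_mono) auto
  hence e: "t * (ln (real s) - ln t) \<le> 1" using t by simp
  have "ln (real s) \<le> real s - 1" using s2 by (intro ln_le_minus_one) auto
  hence "real s * ln (real s) - t * ln t \<le> real s + 1"
    using e by (simp add: t_def algebra_simps)
  thus ?thesis unfolding gg_def using t by (simp add: field_simps)
qed

lemma ln_ge1: assumes "m \<ge> 3" shows "ln (real m) \<ge> 1"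
proof -
  have "exp 1 \<le> real m" using exp_le assms by linarith
  thus ?thesis using assms by (subst ln_ge_iff) auto
qed

lemma gg_mono2: assumes "m \<ge> 3" "u \<ge> m" shows "gg u - real u / 2 \<ge> gg m - real m / 2"
proof -
  have l1: "ln (real m) \<ge> 1" using ln_ge1 assms by auto
  have "ln (real u) \<ge> ln (real m)" using assms by auto
  hence "real u * ln (real u) \<ge> real u * ln (real m)" by (intro mult_left_mono) auto
  moreover have "(real u - real m) * ln (real m) \<ge> (real u - real m) * 1"
    using l1 assms by (intro mult_left_mono) auto
  ultimately have "real u * ln (real u) - real m * ln (real m) \<ge> real u - real m"
    by (simp add: algebra_simps)
  thus ?thesis unfolding gg_def by (simp add: field_simps)
qed

definition hh :: "nat \<Rightarrow> nat \<Rightarrow> real" where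
  "hh m s = (if s \<le> m then gg s else gg m - real m / 2)"

lemma hh_key:
  assumes m: "m \<ge> 3" and s: "s = sl + sr + d" "d \<le> 1" "s \<le> 2 * m"
  shows "hh m s \<le> hh m sl + hh m sr + real (min s (2 * m - s))"
proof (cases "s \<le> m")
  case True
  hence "sl \<le> m" "sr \<le> m" using s by auto
  hence hsl: "hh m sl + hh m sr = gg sl + gg sr" by (simp add: hh_def)
  have mn: "min s (2*m - s) = s" using True by auto
  have J: "gg sl + gg sr \<ge> gg (sl + sr) - real (sl + sr) / 2" by (rule gg_jensen)
  show ?thesis
  proof (cases "d = 0")
    case True
    hence "s = sl + sr" using s by simp
    hence "hh m s = gg (sl + sr)" using \<open>s \<le> m\<close> by (simp add: hh_def)
    moreover have n: "(0::real) \<le> real sl" "(0::real) \<le> real sr" by auto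
    moreover have e: "real (min s (2*m - s)) = real sl + real sr" using mn \<open>s = sl + sr\<close> by simp
    moreover have J': "2 * gg (sl + sr) - (real sl + real sr) \<le> 2 * (gg sl + gg sr)" using J by (simp add: field_simps)
    ultimately show ?thesis unfolding hsl e \<open>hh m s = gg (sl + sr)\<close> using J' n by (smt (verit))
  next
    case False
    hence d1: "d = 1" using s by auto
    hence "sl + sr = s - 1" "s \<ge> 1" using s by auto
    hence J2: "gg (s - 1) - (real s - 1) / 2 \<le> gg sl + gg sr" using J by (simp add: of_nat_diff)
    have st: "gg s \<le> gg (s - 1) + (real s + 1) / 2" using gg_step \<open>s \<ge> 1\<close> by simp
    have hs: "hh m s = gg s" using \<open>s \<le> m\<close> by (simp add: hh_def)
    have e: "real (min s (2*m - s)) = real s" using mn by simp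
    have "gg s \<le> gg sl + gg sr + ((real s - 1) / 2 + (real s + 1) / 2)" using J2 st by linarith
    also have "(real s - 1) / 2 + (real s + 1) / 2 = real s" by (simp add: field_simps)
    finally show ?thesis unfolding hsl e hs by simp
  qed
next
  case False
  hence hs: "hh m s = gg m - real m / 2" by (simp add: hh_def)
  show ?thesis
  proof (cases "sl > m \<or> sr > m")
    case True
    show ?thesis
    proof (cases "sl > m")
      case True
      hence "sr \<le> m" using s by auto
      thus ?thesis using True hs gg_nonneg[of sr] by (simp add: hh_def)
    next
      case False
      hence "sr > m" using \<open>sl > m \<or> sr > m\<close> by auto
      thus ?thesis using False hs gg_nonneg[of sl] by (simp add: hh_def)
    qed
  next
    case False
    hence hsl: "hh m sl + hh m sr = gg sl + gg sr" by (simp add: hh_def)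
    have J: "gg sl + gg sr \<ge> gg (sl + sr) - real (sl + sr) / 2" by (rule gg_jensen)
    have "sl + sr \<ge> m" using \<open>\<not> s \<le> m\<close> s by auto
    hence "gg (sl + sr) - real (sl + sr) / 2 \<ge> gg m - real m / 2" using gg_mono2[OF m] by blast
    moreover have "real (min s (2*m-s)) \<ge> 0" by simp
    ultimately show ?thesis unfolding hsl hs using J by (smt (verit))
  qed
qed


context
  fixes T :: "nat tree" and J :: "nat set" and X Y :: "nat \<Rightarrow> nat"
  assumes finJ: "finite J"
    and monoXY: "\<And>i j. i \<in> J \<Longrightarrow> j \<in> J \<Longrightarrow> i < j \<Longrightarrow> X i < X j \<and> Y i < Y j"
    and XY: "\<And>i j. i \<in> J \<Longrightarrow> j \<in> J \<Longrightarrow> X i < Y j"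
    and inT: "\<And>j. j \<in> J \<Longrightarrow> X j \<in> set_tree T \<and> Y j \<in> set_tree T"
begin

definition WW :: "nat tree \<Rightarrow> nat" where
  "WW t = (\<Sum>j\<in>J. cpair t (X j) (Y j))"

definition sX :: "nat tree \<Rightarrow> nat" where "sX t = card {j\<in>J. X j \<in> set_tree t}"
definition sY :: "nat tree \<Rightarrow> nat" where "sY t = card {j\<in>J. Y j \<in> set_tree t}"
definition ee :: "nat tree \<Rightarrow> nat" where
  "ee t = card {j\<in>J. (X j \<in> set_tree t) \<noteq> (Y j \<in> set_tree t)}"

definition conv :: "nat tree \<Rightarrow> bool" where
  "conv t \<longleftrightarrow> (\<forall>u\<in>set_tree T. \<forall>x\<in>set_tree t. \<forall>y\<in>set_tree t. x < u \<longrightarrow> u < y \<longrightarrow> u \<in> set_tree t)"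

lemma card_indicator: "(\<Sum>j\<in>J. (if P j then 1 else 0::nat)) = card {j\<in>J. P j}"
proof -
  have "{j\<in>J. P j} = J \<inter> Collect P" by auto
  thus ?thesis using finJ by (simp add: sum.If_cases)
qed

lemma WW_Leaf: "WW Leaf = 0" by (simp add: WW_def)

lemma WW_Node: assumes "bst (Node l a r)"
  shows "WW (Node l a r) = WW l + WW r + ee (Node l a r)"
proof -
  have "WW (Node l a r) = (\<Sum>j\<in>J. cpair l (X j) (Y j) + cpair r (X j) (Y j) +
     (if (X j \<in> set_tree (Node l a r)) \<noteq> (Y j \<in> set_tree (Node l a r)) then 1 else 0))"
    unfolding WW_def
    by (rule sum.cong[OF refl], rule cpair_Node[OF assms], simp add: XY)
  also have "\<dots> = WW l + WW r + ee (Node l a r)"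
    unfolding WW_def ee_def sum.distrib card_indicator by simp
  finally show ?thesis .
qed

lemma conv_children: assumes "bst (Node l a r)" "conv (Node l a r)"
  shows "conv l" "conv r"
proof -
  have L: "\<forall>x\<in>set_tree l. x < a" and R: "\<forall>x\<in>set_tree r. a < x" using assms(1) by auto
  show "conv l" unfolding conv_def
  proof (intro ballI impI)
    fix u x y assume h: "u \<in> set_tree T" "x \<in> set_tree l" "y \<in> set_tree l" "x < u" "u < y"
    moreover have "x \<in> set_tree (Node l a r)" "y \<in> set_tree (Node l a r)" using h by simp_all
    ultimately have "u \<in> set_tree (Node l a r)" using assms(2) unfolding conv_def by blast
    moreover have "u < a" using h L by (meson less_trans)
    ultimately show "u \<in> set_tree l" using R by auto
  qed
  show "conv r" unfolding conv_def
  proof (intro ballI impI)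
    fix u x y assume h: "u \<in> set_tree T" "x \<in> set_tree r" "y \<in> set_tree r" "x < u" "u < y"
    moreover have "x \<in> set_tree (Node l a r)" "y \<in> set_tree (Node l a r)" using h by simp_all
    ultimately have "u \<in> set_tree (Node l a r)" using assms(2) unfolding conv_def by blast
    moreover have "a < u" using h R by (meson less_trans)
    ultimately show "u \<in> set_tree r" using L by auto
  qed
qed

lemma card_split:
  assumes "bst (Node l a r)"
  shows "card {j\<in>J. Z j \<in> set_tree (Node l a r)} =
     card {j\<in>J. Z j \<in> set_tree l} + card {j\<in>J. Z j \<in> set_tree r} + card {j\<in>J. Z j = a}"
proof -
  have d: "set_tree l \<inter> set_tree r = {}" "a \<notin> set_tree l" "a \<notin> set_tree r"
    using assms by fastforce+
  have "{j\<in>J. Z j \<in> set_tree (Node l a r)} =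
    ({j\<in>J. Z j \<in> set_tree l} \<union> {j\<in>J. Z j \<in> set_tree r}) \<union> {j\<in>J. Z j = a}" by auto
  also have "card \<dots> = card ({j\<in>J. Z j \<in> set_tree l} \<union> {j\<in>J. Z j \<in> set_tree r}) + card {j\<in>J. Z j = a}"
    using d finJ by (intro card_Un_disjoint) auto
  also have "card ({j\<in>J. Z j \<in> set_tree l} \<union> {j\<in>J. Z j \<in> set_tree r}) =
      card {j\<in>J. Z j \<in> set_tree l} + card {j\<in>J. Z j \<in> set_tree r}"
    using d finJ by (intro card_Un_disjoint) auto
  finally show ?thesis .
qed

lemma X_inj: "i \<in> J \<Longrightarrow> j \<in> J \<Longrightarrow> X i = X j \<Longrightarrow> i = j"
  by (cases i j rule: linorder_cases) (auto dest: monoXY)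
lemma Y_inj: "i \<in> J \<Longrightarrow> j \<in> J \<Longrightarrow> Y i = Y j \<Longrightarrow> i = j"
  by (cases i j rule: linorder_cases) (auto dest: monoXY)

lemma card_root: "card {j\<in>J. X j = a} + card {j\<in>J. Y j = a} \<le> 1"
proof -
  have c1: "card {j\<in>J. X j = a} \<le> 1"
    unfolding One_nat_def using finJ X_inj by (subst card_le_Suc0_iff_eq) auto
  have c2: "card {j\<in>J. Y j = a} \<le> 1"
    unfolding One_nat_def using finJ Y_inj by (subst card_le_Suc0_iff_eq) auto
  have "{j\<in>J. X j = a} = {} \<or> {j\<in>J. Y j = a} = {}"
    using XY by fastforce
  thus ?thesis
  proof
    assume h: "{j\<in>J. X j = a} = {}"
    have "card {j\<in>J. X j = a} = 0" by (simp only: h card.empty)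
    thus ?thesis using c2 by simp
  next
    assume h: "{j\<in>J. Y j = a} = {}"
    have "card {j\<in>J. Y j = a} = 0" by (simp only: h card.empty)
    thus ?thesis using c1 by simp
  qed
qed

lemma ee_bound:
  assumes cv: "conv t"
  shows "ee t \<ge> min (sX t + sY t) (2 * card J - (sX t + sY t))"
proof -
  define A where "A = {j\<in>J. X j \<in> set_tree t}"
  define B where "B = {j\<in>J. Y j \<in> set_tree t}"
  have fA: "finite A" "finite B" "A \<subseteq> J" "B \<subseteq> J" using finJ by (auto simp: A_def B_def)
  have E: "{j\<in>J. (X j \<in> set_tree t) \<noteq> (Y j \<in> set_tree t)} = (A \<union> B) - (A \<inter> B)"
    by (auto simp: A_def B_def)
  have ee: "ee t = card (A \<union> B) - card (A \<inter> B)"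
    unfolding ee_def E
  proof (rule card_Diff_subset)
    show "finite (A \<inter> B)" using fA by simp
    show "A \<inter> B \<subseteq> A \<union> B" by blast
  qed
  have UI: "card (A \<union> B) + card (A \<inter> B) = card A + card B"
    using card_Un_Int[OF fA(1) fA(2)] by simp
  have s: "sX t + sY t = card A + card B" unfolding sX_def sY_def A_def B_def by (rule refl)
  show ?thesis
  proof (cases "A \<inter> B = {}")
    case True thus ?thesis using ee UI s by simp
  next
    case False
    then obtain i where i: "i \<in> J" "X i \<in> set_tree t" "Y i \<in> set_tree t"
      by (auto simp: A_def B_def)
    have "A \<union> B = J"
    proof
      show "A \<union> B \<subseteq> J" using fA by auto
      show "J \<subseteq> A \<union> B"
      proof
        fix j assume j: "j \<in> J"
        consider "j = i" | "i < j" | "j < i" by linarith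
        thus "j \<in> A \<union> B"
        proof cases
          case 1 thus ?thesis using i by (auto simp: A_def)
        next
          case 2
          have "X i < X j" "X j < Y i" using monoXY[OF i(1) j 2] XY[OF j i(1)] by auto
          moreover have "X j \<in> set_tree T" using inT[OF j] by simp
          ultimately have "X j \<in> set_tree t" using cv i(2,3) unfolding conv_def by (meson)
          thus ?thesis using j by (auto simp: A_def)
        next
          case 3
          have "X i < Y j" "Y j < Y i" using monoXY[OF j i(1) 3] XY[OF i(1) j] by auto
          moreover have "Y j \<in> set_tree T" using inT[OF j] by simp
          ultimately have "Y j \<in> set_tree t" using cv i(2,3) unfolding conv_def by (meson)
          thus ?thesis using j by (auto simp: B_def)
        qed
      qed
    qed
    hence "card (A \<union> B) = card J" by simp
    thus ?thesis using ee UI s by simp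
  qed
qed

lemma sXY_le: "sX t \<le> card J" "sY t \<le> card J"
  unfolding sX_def sY_def using finJ by (simp_all add: card_mono)

lemma WW_main:
  assumes m: "card J \<ge> 3"
  shows "bst t \<Longrightarrow> conv t \<Longrightarrow> real (WW t) \<ge> hh (card J) (sX t + sY t)"
proof (induction t)
  case Leaf
  show ?case by (simp add: WW_Leaf sX_def sY_def hh_def)
next
  case (Node l a r)
  have bl: "bst l" "bst r" using Node.prems by auto
  have cl: "conv l" "conv r" using conv_children Node.prems by auto
  have IHl: "real (WW l) \<ge> hh (card J) (sX l + sY l)" using Node.IH bl cl by auto
  have IHr: "real (WW r) \<ge> hh (card J) (sX r + sY r)" using Node.IH bl cl by auto
  define d where "d = card {j\<in>J. X j = a} + card {j\<in>J. Y j = a}"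
  have s: "sX (Node l a r) + sY (Node l a r) = (sX l + sY l) + (sX r + sY r) + d"
    using card_split[OF Node.prems(1), of X] card_split[OF Node.prems(1), of Y]
    by (simp add: sX_def sY_def d_def)
  have d1: "d \<le> 1" using card_root by (simp add: d_def)
  have sle: "sX (Node l a r) + sY (Node l a r) \<le> 2 * card J" using sXY_le[of "Node l a r"] by simp
  have key: "hh (card J) (sX (Node l a r) + sY (Node l a r)) \<le> hh (card J) (sX l + sY l) + hh (card J) (sX r + sY r)
     + real (min (sX (Node l a r) + sY (Node l a r)) (2 * card J - (sX (Node l a r) + sY (Node l a r))))"
    by (rule hh_key[OF m s d1 sle])
  have eb: "real (ee (Node l a r)) \<ge> real (min (sX (Node l a r) + sY (Node l a r)) (2 * card J - (sX (Node l a r) + sY (Node l a r))))"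
    using ee_bound[OF Node.prems(2)] by linarith
  have "real (WW (Node l a r)) = real (WW l) + real (WW r) + real (ee (Node l a r))"
    using WW_Node[OF Node.prems(1)] by simp
  thus ?case using key eb IHl IHr by linarith
qed

lemma shift_bound:
  assumes bT: "bst T" and m: "card J \<ge> 3"
  shows "real (\<Sum>j\<in>J. dist_T T (X j) (Y j)) \<ge> gg (card J) - real (card J) / 2"
proof -
  have cT: "conv T" unfolding conv_def by auto
  have "{j\<in>J. X j \<in> set_tree T} = J" "{j\<in>J. Y j \<in> set_tree T} = J" using inT by auto
  hence "sX T = card J" "sY T = card J" unfolding sX_def sY_def by simp_all
  hence "hh (card J) (sX T + sY T) = gg (card J) - real (card J) / 2"
    using m by (simp add: hh_def)
  moreover have "WW T = (\<Sum>j\<in>J. dist_T T (X j) (Y j))"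
    unfolding WW_def cpair_def using inT by (intro sum.cong) auto
  ultimately show ?thesis using WW_main[OF m bT cT] by simp
qed

end


fun upd :: "nat list \<Rightarrow> nat list \<Rightarrow> nat list \<Rightarrow> nat list" where
  "upd pos (f # F) (s # S) = upd (pos[f := s]) F S"
| "upd pos _ _ = pos"

lemma length_upd[simp]: "length (upd pos F S) = length pos"
  by (induction pos F S rule: upd.induct) auto

lemma fc_append: "length F1 = length S1 \<Longrightarrow>
  finger_cost T pos (F1 @ F2) (S1 @ S2) = finger_cost T pos F1 S1 + finger_cost T (upd pos F1 S1) F2 S2"
proof (induction S1 arbitrary: pos F1)
  case Nil thus ?case by simp
next
  case (Cons s S1)
  then obtain f F1' where "F1 = f # F1'" by (cases F1) auto
  thus ?case using Cons by simp
qed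

lemma block_lemma:
  "distinct B \<Longrightarrow> set B \<inter> V = {} \<Longrightarrow> length F = length B \<Longrightarrow> (\<forall>f\<in>set F. f < length pos) \<Longrightarrow>
   card {f. f < length pos \<and> pos ! f \<notin> V} < length B \<Longrightarrow>
   \<exists>x\<in>set B. \<exists>y\<in>set B \<union> V. x \<noteq> y \<and> dist_T T x y \<le> finger_cost T pos F B"
proof (induction B arbitrary: pos F V)
  case Nil thus ?case by simp
next
  case (Cons s B)
  obtain f F' where F: "F = f # F'" using Cons.prems(3) by (cases F) auto
  have fl: "f < length pos" using Cons.prems(4) F by simp
  have fc: "finger_cost T pos F (s # B) = 1 + dist_T T s (pos ! f) + finger_cost T (pos[f := s]) F' B"
    using F by simp
  show ?case
  proof (cases "pos ! f \<in> V")
    case True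
    have "s \<notin> V" using Cons.prems(2) by auto
    hence "s \<noteq> pos ! f" using True by auto
    thus ?thesis using True fc by (intro bexI[of _ s] bexI[of _ "pos ! f"]) auto
  next
    case False
    define pos' where "pos' = pos[f := s]"
    define V' where "V' = insert s V"
    have sub: "{f'. f' < length pos' \<and> pos' ! f' \<notin> V'} \<subseteq> {f'. f' < length pos \<and> pos ! f' \<notin> V} - {f}"
      unfolding pos'_def V'_def using fl by (auto simp: nth_list_update split: if_split_asm)
    have fin: "finite {f'. f' < length pos \<and> pos ! f' \<notin> V}" by simp
    have "card {f'. f' < length pos' \<and> pos' ! f' \<notin> V'} \<le> card ({f'. f' < length pos \<and> pos ! f' \<notin> V} - {f})"
      using sub fin by (intro card_mono) auto
    also have "\<dots> = card {f'. f' < length pos \<and> pos ! f' \<notin> V} - 1"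
      using fl False by (simp add: card_Diff_singleton)
    finally have c0: "card {f'. f' < length pos' \<and> pos' ! f' \<notin> V'} \<le> card {f'. f' < length pos \<and> pos ! f' \<notin> V} - 1" .
    have "f \<in> {f'. f' < length pos \<and> pos ! f' \<notin> V}" using fl False by simp
    hence "card {f'. f' < length pos \<and> pos ! f' \<notin> V} \<ge> 1" using fin
      by (metis One_nat_def Suc_leI card_gt_0_iff empty_iff)
    hence c: "card {f'. f' < length pos' \<and> pos' ! f' \<notin> V'} < length B"
      using Cons.prems(5) c0 by simp
    have "\<exists>x\<in>set B. \<exists>y\<in>set B \<union> V'. x \<noteq> y \<and> dist_T T x y \<le> finger_cost T pos' F' B"
    proof (rule Cons.IH)
      show "distinct B" using Cons.prems(1) by simp
      show "set B \<inter> V' = {}" using Cons.prems(1,2) unfolding V'_def by auto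
      show "length F' = length B" using Cons.prems(3) F by simp
      show "\<forall>f\<in>set F'. f < length pos'" using Cons.prems(4) F unfolding pos'_def by simp
      show "card {f. f < length pos' \<and> pos' ! f \<notin> V'} < length B" by (rule c)
    qed
    then obtain x y where xy: "x \<in> set B" "y \<in> set B \<union> V'" "x \<noteq> y" "dist_T T x y \<le> finger_cost T pos' F' B"
      by blast
    have "y \<in> set (s # B) \<union> V" using xy(2) unfolding V'_def by auto
    moreover have "dist_T T x y \<le> finger_cost T pos F (s # B)" using xy(4) fc unfolding pos'_def by simp
    ultimately show ?thesis using xy(1,3) by (intro bexI[of _ x] bexI[of _ y]) auto
  qed
qed

definition blk :: "nat \<Rightarrow> nat \<Rightarrow> nat \<Rightarrow> nat list" where
  "blk k Mp j = map (\<lambda>a. a * Mp + j + 1) [0..<k]"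

definition PP :: "nat \<Rightarrow> (nat \<times> nat) set" where
  "PP k = {(a, b). a < b \<and> b < k}"

lemma PP_sub: "PP k \<subseteq> {..<k} \<times> {..<k}" unfolding PP_def by auto
lemma finite_PP: "finite (PP k)" using PP_sub finite_subset by blast
lemma card_PP: "card (PP k) \<le> k * k"
  using card_mono[OF _ PP_sub] by (simp add: card_cartesian_product)
lemma PP_ne: "k \<ge> 2 \<Longrightarrow> (0, 1) \<in> PP k" unfolding PP_def by auto

definition dd :: "nat tree \<Rightarrow> nat \<Rightarrow> nat \<Rightarrow> nat \<times> nat \<Rightarrow> nat" where
  "dd T Mp j p = dist_T T (fst p * Mp + j + 1) (snd p * Mp + j + 1)"

definition mn :: "nat tree \<Rightarrow> nat \<Rightarrow> nat \<Rightarrow> nat \<Rightarrow> nat" where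
  "mn T k Mp j = Min (dd T Mp j ` PP k)"

lemma mn_le: "p \<in> PP k \<Longrightarrow> mn T k Mp j \<le> dd T Mp j p"
  unfolding mn_def using finite_PP by (intro Min_le) auto

lemma mn_attained: "k \<ge> 2 \<Longrightarrow> \<exists>p\<in>PP k. dd T Mp j p = mn T k Mp j"
proof -
  assume "k \<ge> 2"
  hence "PP k \<noteq> {}" using PP_ne by blast
  hence "mn T k Mp j \<in> dd T Mp j ` PP k" unfolding mn_def using finite_PP by (intro Min_in) auto
  thus ?thesis by auto
qed

lemma block_mn:
  assumes k: "k \<ge> 2" and Mp: "Mp \<ge> 1" and lp: "length pos = k - 1"
    and lF: "length F = k" and Fl: "\<forall>f\<in>set F. f < k - 1"
  shows "mn T k Mp j \<le> finger_cost T pos F (blk k Mp j)"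
proof -
  have inj: "inj_on (\<lambda>a. a * Mp + j + 1) {0..<k}"
    using Mp by (auto simp: inj_on_def)
  have dB: "distinct (blk k Mp j)" unfolding blk_def using inj by (simp add: distinct_map)
  have lB: "length (blk k Mp j) = k" by (simp add: blk_def)
  have "card {f. f < length pos \<and> pos ! f \<notin> {}} \<le> length pos"
    by (rule order_trans[OF card_mono[of "{..<length pos}"]]) auto
  hence c: "card {f. f < length pos \<and> pos ! f \<notin> {}} < length (blk k Mp j)" using lp lB k by simp
  obtain x y where xy: "x \<in> set (blk k Mp j)" "y \<in> set (blk k Mp j)" "x \<noteq> y"
      "dist_T T x y \<le> finger_cost T pos F (blk k Mp j)"
    using block_lemma[OF dB _ _ _ c, of F T] lF lB Fl lp by auto
  obtain a where a: "a < k" "x = a * Mp + j + 1" using xy(1) by (auto simp: blk_def)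
  obtain b where b: "b < k" "y = b * Mp + j + 1" using xy(2) by (auto simp: blk_def)
  have "a \<noteq> b" using a b xy(3) by auto
  show ?thesis
  proof (cases "a < b")
    case True
    hence "(a, b) \<in> PP k" using b by (simp add: PP_def)
    hence "mn T k Mp j \<le> dd T Mp j (a, b)" by (rule mn_le)
    also have "\<dots> = dist_T T x y" using a b by (simp add: dd_def)
    finally show ?thesis using xy(4) by simp
  next
    case False
    hence "(b, a) \<in> PP k" using a \<open>a \<noteq> b\<close> by (simp add: PP_def)
    hence "mn T k Mp j \<le> dd T Mp j (b, a)" by (rule mn_le)
    also have "\<dots> = dist_T T x y" using a b by (simp add: dd_def dist_sym)
    finally show ?thesis using xy(4) by simp
  qed
qed

lemma length_concat_blk: "length (concat (map (blk k Mp) js)) = k * length js"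
  by (induction js) (auto simp: blk_def)

lemma rounds_lb:
  assumes k: "k \<ge> 2" and Mp: "Mp \<ge> 1"
  shows "length pos = k - 1 \<Longrightarrow> length F = length (concat (map (blk k Mp) js)) \<Longrightarrow>
    \<forall>f\<in>set F. f < k - 1 \<Longrightarrow>
    (\<Sum>j\<leftarrow>js. mn T k Mp j) \<le> finger_cost T pos F (concat (map (blk k Mp) js))"
proof (induction js arbitrary: pos F)
  case Nil thus ?case by simp
next
  case (Cons j js)
  have lb: "length (blk k Mp j) = k" by (simp add: blk_def)
  define F1 where "F1 = take k F"
  define F2 where "F2 = drop k F"
  have FF: "F = F1 @ F2" unfolding F1_def F2_def by simp
  have lF1: "length F1 = length (blk k Mp j)" using Cons.prems(2) lb
    by (simp add: F1_def)
  have fc: "finger_cost T pos F (concat (map (blk k Mp) (j # js))) =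
     finger_cost T pos F1 (blk k Mp j) + finger_cost T (upd pos F1 (blk k Mp j)) F2 (concat (map (blk k Mp) js))"
    using fc_append[OF lF1] FF by simp
  have "mn T k Mp j \<le> finger_cost T pos F1 (blk k Mp j)"
    using block_mn[OF k Mp Cons.prems(1)] lF1 lb Cons.prems(3) FF by auto
  moreover have "(\<Sum>j\<leftarrow>js. mn T k Mp j) \<le> finger_cost T (upd pos F1 (blk k Mp j)) F2 (concat (map (blk k Mp) js))"
    using Cons.IH[of "upd pos F1 (blk k Mp j)" F2] Cons.prems FF lF1 by auto
  ultimately show ?case using fc by simp
qed


lemma class_bound:
  assumes bT: "bst T" and Mp: "M < Mp" and ab: "a < b"
    and keys: "\<And>j. j < M \<Longrightarrow> a * Mp + j + 1 \<in> set_tree T \<and> b * Mp + j + 1 \<in> set_tree T"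
    and Jsub: "J \<subseteq> {..<M}" and L: "L \<ge> 3"
  shows "real (\<Sum>j\<in>J. dist_T T (a * Mp + j + 1) (b * Mp + j + 1)) \<ge> (real (card J) - real L) / 2 * (ln (real L) - 1)"
proof -
  have lnL: "ln (real L) \<ge> 1" using ln_ge1[OF L] .
  have finJ: "finite J" using Jsub finite_subset by blast
  show ?thesis
  proof (cases "card J \<ge> L")
    case False
    hence "(real (card J) - real L) / 2 * (ln (real L) - 1) \<le> 0"
      using lnL by (intro mult_nonpos_nonneg) auto
    thus ?thesis by (smt (verit) of_nat_0_le_iff)
  next
    case True
    have c3: "card J \<ge> 3" using True L by simp
    have sb: "real (\<Sum>j\<in>J. dist_T T (a * Mp + j + 1) (b * Mp + j + 1)) \<ge> gg (card J) - real (card J) / 2"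
    proof (rule shift_bound[where X = "\<lambda>j. a * Mp + j + 1" and Y = "\<lambda>j. b * Mp + j + 1"])
      show "finite J" by (rule finJ)
      show "\<And>i j. i \<in> J \<Longrightarrow> j \<in> J \<Longrightarrow> i < j \<Longrightarrow> a * Mp + i + 1 < a * Mp + j + 1 \<and> b * Mp + i + 1 < b * Mp + j + 1"
        by simp
      show "\<And>i j. i \<in> J \<Longrightarrow> j \<in> J \<Longrightarrow> a * Mp + i + 1 < b * Mp + j + 1"
      proof -
        fix i j assume "i \<in> J" "j \<in> J"
        hence "i < Mp" using Jsub Mp by auto
        have "a * Mp + Mp \<le> b * Mp" using ab by (metis Suc_leI mult_Suc mult_le_mono1 add.commute)
        thus "a * Mp + i + 1 < b * Mp + j + 1" using \<open>i < Mp\<close> by linarith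
      qed
      show "\<And>j. j \<in> J \<Longrightarrow> a * Mp + j + 1 \<in> set_tree T \<and> b * Mp + j + 1 \<in> set_tree T"
        using keys Jsub by auto
      show "bst T" by (rule bT)
      show "3 \<le> card J" by (rule c3)
    qed
    have "(real (card J) - real L) / 2 * (ln (real L) - 1) \<le> real (card J) / 2 * (ln (real L) - 1)"
      using lnL by (intro mult_right_mono) auto
    also have "\<dots> \<le> real (card J) / 2 * (ln (real (card J)) - 1)"
      using True L by (intro mult_left_mono) auto
    also have "\<dots> = gg (card J) - real (card J) / 2"
      unfolding gg_def by (simp add: right_diff_distrib)
    finally show ?thesis using sb by linarith
  qed
qed

lemma classes_lb:
  assumes bT: "bst T" and k: "k \<ge> 2" and Mp: "M < Mp"
    and keys: "\<And>a j. a < k \<Longrightarrow> j < M \<Longrightarrow> a * Mp + j + 1 \<in> set_tree T"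
    and L: "L \<ge> 3" and M: "M = 2 * k * k * L"
  shows "real (\<Sum>j<M. mn T k Mp j) \<ge> real M / 4 * (ln (real L) - 1)"
proof -
  define pr where "pr j = (SOME p. p \<in> PP k \<and> dd T Mp j p = mn T k Mp j)" for j
  have pr: "pr j \<in> PP k \<and> dd T Mp j (pr j) = mn T k Mp j" for j
  proof -
    have "\<exists>p. p \<in> PP k \<and> dd T Mp j p = mn T k Mp j" using mn_attained[OF k] by blast
    thus ?thesis unfolding pr_def by (rule someI_ex)
  qed
  define cl where "cl p = {j \<in> {..<M}. pr j = p}" for p
  have img: "pr ` {..<M} \<subseteq> PP k" using pr by auto
  have "(\<Sum>j<M. mn T k Mp j) = (\<Sum>j<M. dd T Mp j (pr j))" using pr by simp
  also have "\<dots> = (\<Sum>p\<in>PP k. \<Sum>j\<in>cl p. dd T Mp j (pr j))"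
    unfolding cl_def using sum.group[OF _ finite_PP img, of "\<lambda>j. dd T Mp j (pr j)"] by simp
  also have "\<dots> = (\<Sum>p\<in>PP k. \<Sum>j\<in>cl p. dist_T T (fst p * Mp + j + 1) (snd p * Mp + j + 1))"
    by (intro sum.cong refl) (simp add: cl_def dd_def)
  finally have eq: "(\<Sum>j<M. mn T k Mp j) = (\<Sum>p\<in>PP k. \<Sum>j\<in>cl p. dist_T T (fst p * Mp + j + 1) (snd p * Mp + j + 1))" .
  have each: "real (\<Sum>j\<in>cl p. dist_T T (fst p * Mp + j + 1) (snd p * Mp + j + 1)) \<ge>
      (real (card (cl p)) - real L) / 2 * (ln (real L) - 1)" if p: "p \<in> PP k" for p
  proof -
    obtain a b where pab: "p = (a, b)" "a < b" "b < k" using p by (auto simp: PP_def)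
    show ?thesis unfolding pab(1) fst_conv snd_conv
      by (rule class_bound[OF bT Mp pab(2) _ _ L]) (use keys pab in \<open>auto simp: cl_def\<close>)
  qed
  have cs: "(\<Sum>p\<in>PP k. card (cl p)) = M"
    using sum.group[OF _ finite_PP img, of "\<lambda>_. 1::nat"] by (simp add: cl_def)
  have "real (\<Sum>j<M. mn T k Mp j) = (\<Sum>p\<in>PP k. real (\<Sum>j\<in>cl p. dist_T T (fst p * Mp + j + 1) (snd p * Mp + j + 1)))"
    unfolding eq by simp
  also have "\<dots> \<ge> (\<Sum>p\<in>PP k. (real (card (cl p)) - real L) / 2 * (ln (real L) - 1))"
    using each by (intro sum_mono) auto
  finally have s1: "real (\<Sum>j<M. mn T k Mp j) \<ge> (\<Sum>p\<in>PP k. (real (card (cl p)) - real L) / 2 * (ln (real L) - 1))" .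
  have "(\<Sum>p\<in>PP k. (real (card (cl p)) - real L) / 2 * (ln (real L) - 1)) =
      (real (\<Sum>p\<in>PP k. card (cl p)) - real (card (PP k)) * real L) / 2 * (ln (real L) - 1)"
  proof -
    have A: "(\<Sum>p\<in>PP k. (real (card (cl p)) - real L)) = real (\<Sum>p\<in>PP k. card (cl p)) - real (card (PP k)) * real L"
      by (simp add: sum_subtractf)
    have "(\<Sum>p\<in>PP k. (real (card (cl p)) - real L) / 2 * (ln (real L) - 1)) =
        (\<Sum>p\<in>PP k. (real (card (cl p)) - real L)) / 2 * (ln (real L) - 1)"
      by (simp add: sum_distrib_right[symmetric] sum_divide_distrib[symmetric])
    thus ?thesis unfolding A .
  qed
  also have "\<dots> = (real M - real (card (PP k)) * real L) / 2 * (ln (real L) - 1)" using cs by simp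
  also have "\<dots> \<ge> (real M - real (k * k) * real L) / 2 * (ln (real L) - 1)"
  proof -
    have "real (card (PP k)) \<le> real (k * k)" using card_PP by (simp only: of_nat_le_iff)
    hence "real (card (PP k)) * real L \<le> real (k * k) * real L" by (intro mult_right_mono) auto
    moreover have "ln (real L) - 1 \<ge> 0" using ln_ge1[OF L] by simp
    ultimately show ?thesis by (intro mult_right_mono divide_right_mono) auto
  qed
  also have "(real M - real (k * k) * real L) / 2 * (ln (real L) - 1) = real M / 4 * (ln (real L) - 1)"
    using M by (simp add: field_simps)
  finally show ?thesis using s1 by linarith
qed


fun spn :: "nat \<Rightarrow> nat \<Rightarrow> nat tree" where
  "spn lo 0 = Leaf"
| "spn lo (Suc c) = Node Leaf lo (spn (Suc lo) c)"

lemma inorder_spn: "inorder (spn lo c) = [lo..<lo + c]"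
  by (induction c arbitrary: lo) (auto simp: upt_conv_Cons)

lemma set_spn: "set_tree (spn lo c) = {lo..<lo + c}"
  by (metis inorder_spn set_inorder set_upt)

lemma bst_spn: "bst (spn lo c)"
  unfolding bst_iff_sorted_wrt_less inorder_spn by simp

lemma bst_on_spn: "bst_on n (spn 1 n)"
  unfolding bst_on_def using bst_spn set_spn by auto

lemma path_spn: "lo \<le> x \<Longrightarrow> x < lo + c \<Longrightarrow> path (spn lo c) x = [lo..<Suc x]"
proof (induction c arbitrary: lo)
  case 0 thus ?case by simp
next
  case (Suc c)
  show ?case
  proof (cases "x = lo")
    case True thus ?thesis by simp
  next
    case False
    hence "Suc lo \<le> x" "x < Suc lo + c" using Suc.prems by auto
    thus ?thesis using Suc.IH[of "Suc lo"] False Suc.prems by (simp add: upt_conv_Cons)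
  qed
qed

lemma lcp_upt: "lcp [lo..<x] [lo..<y] = min x y - lo"
proof (induction "min x y - lo" arbitrary: lo)
  case 0 thus ?case
    by (cases "lo < x"; cases "lo < y") (auto simp: upt_conv_Cons)
next
  case (Suc d)
  hence "lo < x" "lo < y" by auto
  thus ?case using Suc by (simp add: upt_conv_Cons)
qed

lemma dist_spn: "lo \<le> x \<Longrightarrow> x < lo + c \<Longrightarrow> lo \<le> y \<Longrightarrow> y < lo + c \<Longrightarrow>
  dist_T (spn lo c) x y = (if x \<le> y then y - x else x - y)"
proof -
  assume h: "lo \<le> x" "x < lo + c" "lo \<le> y" "y < lo + c"
  have "dist_T (spn lo c) x y = length [lo..<Suc x] + length [lo..<Suc y] - 2 * lcp [lo..<Suc x] [lo..<Suc y]"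
    unfolding dist_T_def using path_spn[of lo x c] path_spn[of lo y c] h by simp
  also have "\<dots> = (Suc x - lo) + (Suc y - lo) - 2 * (min (Suc x) (Suc y) - lo)"
    by (simp only: lcp_upt length_upt)
  also have "\<dots> = (if x \<le> y then y - x else x - y)" using h by auto
  finally show ?thesis .
qed

lemma lcp_same: "lcp xs xs = length xs" by (induction xs) auto

lemma fc_distinct:
  "distinct as \<Longrightarrow> \<forall>a\<in>set as. a < length pos \<Longrightarrow>
   finger_cost T pos as (map g as) = (\<Sum>a\<leftarrow>as. 1 + dist_T T (g a) (pos ! a)) \<and>
   (\<forall>b < length pos. upd pos as (map g as) ! b = (if b \<in> set as then g b else pos ! b))"
proof (induction as arbitrary: pos)
  case Nil thus ?case by simp
next
  case (Cons a as)
  have IH: "finger_cost T (pos[a := g a]) as (map g as) = (\<Sum>a'\<leftarrow>as. 1 + dist_T T (g a') (pos[a := g a] ! a')) \<and>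
   (\<forall>b < length pos. upd (pos[a := g a]) as (map g as) ! b = (if b \<in> set as then g b else pos[a := g a] ! b))"
    using Cons.IH[of "pos[a := g a]"] Cons.prems by simp
  have "(\<Sum>a'\<leftarrow>as. 1 + dist_T T (g a') (pos[a := g a] ! a')) = (\<Sum>a'\<leftarrow>as. 1 + dist_T T (g a') (pos ! a'))"
  proof (rule arg_cong[where f = sum_list], rule map_cong[OF refl])
    fix a' assume "a' \<in> set as"
    hence "a' \<noteq> a" using Cons.prems by auto
    thus "1 + dist_T T (g a') (pos[a := g a] ! a') = 1 + dist_T T (g a') (pos ! a')" by simp
  qed
  thus ?case using IH Cons.prems by (auto simp: nth_list_update)
qed

lemma sum_list_le_const: "(\<forall>x\<in>set xs. f x \<le> (c::nat)) \<Longrightarrow> sum_list (map f xs) \<le> c * length xs"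
  by (induction xs) auto

context
  fixes k Mp M :: nat
  assumes k: "k \<ge> 1" and Mp: "M < Mp"
begin

definition posj :: "nat \<Rightarrow> nat list \<Rightarrow> bool" where
  "posj j pos \<longleftrightarrow> length pos = k \<and> (\<forall>a<k. a * Mp + j \<le> pos ! a \<and> pos ! a \<le> a * Mp + j + 1 \<and> 1 \<le> pos ! a)"

lemma round_ub:
  assumes pj: "posj j pos" and jM: "j < M"
  shows "finger_cost (spn 1 (k * Mp)) pos [0..<k] (blk k Mp j) \<le> 2 * k \<and>
         posj (Suc j) (upd pos [0..<k] (blk k Mp j))"
proof -
  define g where "g a = a * Mp + j + 1" for a
  have bl: "blk k Mp j = map g [0..<k]" by (simp add: blk_def g_def)
  have lp: "length pos = k" using pj by (simp add: posj_def)
  have fd: "finger_cost (spn 1 (k * Mp)) pos [0..<k] (map g [0..<k]) = (\<Sum>a\<leftarrow>[0..<k]. 1 + dist_T (spn 1 (k * Mp)) (g a) (pos ! a)) \<and>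
   (\<forall>b < length pos. upd pos [0..<k] (map g [0..<k]) ! b = (if b \<in> set [0..<k] then g b else pos ! b))"
    by (rule fc_distinct) (use lp in auto)
  have each: "1 + dist_T (spn 1 (k * Mp)) (g a) (pos ! a) \<le> 2" if a: "a \<in> set [0..<k]" for a
  proof -
    have ak: "a < k" using a by simp
    have p: "a * Mp + j \<le> pos ! a" "pos ! a \<le> a * Mp + j + 1" "1 \<le> pos ! a" using pj ak by (auto simp: posj_def)
    have "a * Mp + Mp \<le> k * Mp" using ak by (metis Suc_leI add.commute mult_Suc mult_le_mono1)
    hence gb: "g a < 1 + k * Mp" using jM Mp by (simp add: g_def)
    have pb: "pos ! a < 1 + k * Mp" using p \<open>a * Mp + Mp \<le> k * Mp\<close> jM Mp by linarith
    have "dist_T (spn 1 (k * Mp)) (g a) (pos ! a) = (if g a \<le> pos ! a then pos ! a - g a else g a - pos ! a)"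
      by (rule dist_spn) (use gb pb p in \<open>auto simp: g_def\<close>)
    also have "\<dots> \<le> 1" using p by (auto simp: g_def)
    finally show ?thesis by simp
  qed
  have "(\<Sum>a\<leftarrow>[0..<k]. 1 + dist_T (spn 1 (k * Mp)) (g a) (pos ! a)) \<le> 2 * length [0..<k]"
    using each by (intro sum_list_le_const) auto
  hence c: "finger_cost (spn 1 (k * Mp)) pos [0..<k] (blk k Mp j) \<le> 2 * k" using fd bl by simp
  have "posj (Suc j) (upd pos [0..<k] (blk k Mp j))"
    unfolding posj_def using fd lp bl by (auto simp: g_def)
  thus ?thesis using c by simp
qed

lemma rounds_ub:
  "posj j pos \<Longrightarrow> j + c \<le> M \<Longrightarrow>
   finger_cost (spn 1 (k * Mp)) pos (concat (map (\<lambda>_. [0..<k]) [j..<j+c])) (concat (map (blk k Mp) [j..<j+c])) \<le> 2 * k * c"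
proof (induction c arbitrary: j pos)
  case 0 thus ?case by simp
next
  case (Suc c)
  have jm: "j < M" using Suc.prems by simp
  have r: "finger_cost (spn 1 (k * Mp)) pos [0..<k] (blk k Mp j) \<le> 2 * k \<and>
         posj (Suc j) (upd pos [0..<k] (blk k Mp j))" using round_ub[OF Suc.prems(1) jm] .
  have up: "[j..<j + Suc c] = j # [Suc j..<Suc j + c]" by (simp add: upt_conv_Cons)
  have lb: "length [0..<k] = length (blk k Mp j)" by (simp add: blk_def)
  have "finger_cost (spn 1 (k * Mp)) pos (concat (map (\<lambda>_. [0..<k]) [j..<j + Suc c])) (concat (map (blk k Mp) [j..<j + Suc c]))
     = finger_cost (spn 1 (k * Mp)) pos [0..<k] (blk k Mp j) +
       finger_cost (spn 1 (k * Mp)) (upd pos [0..<k] (blk k Mp j)) (concat (map (\<lambda>_. [0..<k]) [Suc j..<Suc j + c])) (concat (map (blk k Mp) [Suc j..<Suc j + c]))"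
    unfolding up by (simp add: fc_append[OF lb])
  also have "\<dots> \<le> 2 * k + 2 * k * c"
    using r Suc.IH[of "Suc j" "upd pos [0..<k] (blk k Mp j)"] Suc.prems by (intro add_mono) auto
  finally show ?case by simp
qed

lemma prefix_cost: "length pos = k \<Longrightarrow> pos ! 0 = 1 \<Longrightarrow>
  finger_cost T pos (replicate c 0 @ F) (replicate c 1 @ S) = c + finger_cost T pos F S"
proof (induction c)
  case 0 thus ?case by simp
next
  case (Suc c)
  have "pos[0 := 1] = pos" using Suc.prems by (metis list_update_id)
  thus ?case using Suc by (simp add: dist_T_def lcp_same)
qed


lemma LF_ub: "LF k (k * Mp) (replicate k 1 @ concat (map (blk k Mp) [0..<M])) \<le> 2 * (k * Mp)"
proof -
  define T where "T = spn 1 (k * Mp)"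
  define S where "S = replicate k 1 @ concat (map (blk k Mp) [0..<M])"
  define pos0 where "pos0 = map (\<lambda>a. a * Mp + 1) [0..<k]"
  define F where "F = replicate k 0 @ concat (map (\<lambda>_. [0..<k]) [0..<M])"
  have lp: "length pos0 = k" by (simp add: pos0_def)
  have p00: "pos0 ! 0 = 1" using k by (simp add: pos0_def)
  have pj: "posj 0 pos0" unfolding posj_def pos0_def by simp
  have "finger_cost T pos0 F S = k + finger_cost T pos0 (concat (map (\<lambda>_. [0..<k]) [0..<M])) (concat (map (blk k Mp) [0..<M]))"
    unfolding F_def S_def by (rule prefix_cost[OF lp p00])
  also have "\<dots> \<le> k + 2 * k * M"
    using rounds_ub[OF pj, of M] unfolding T_def by simp
  also have "\<dots> \<le> 2 * (k * Mp)"
  proof -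
    have "k + 2 * k * M \<le> 2 * k * (M + 1)" by (simp add: algebra_simps)
    also have "\<dots> \<le> 2 * k * Mp" using Mp by (intro mult_le_mono2) simp
    finally show ?thesis by simp
  qed
  finally have fc: "finger_cost T pos0 F S \<le> 2 * (k * Mp)" .
  have lenF: "length F = length S"
  proof -
    have "length (concat (map (\<lambda>_. [0..<k]) [0..<M])) = k * M"
      by (induction M) auto
    thus ?thesis by (simp add: F_def S_def length_concat_blk)
  qed
  have "set pos0 \<subseteq> set_tree T"
  proof
    fix x assume "x \<in> set pos0"
    then obtain a where a: "a < k" "x = a * Mp + 1" by (auto simp: pos0_def)
    have "a * Mp + Mp \<le> k * Mp" using a(1) by (metis Suc_leI add.commute mult_Suc mult_le_mono1)
    thus "x \<in> set_tree T" using a Mp by (simp add: T_def set_spn)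
  qed
  moreover have "set F \<subseteq> {..<k}" using k by (auto simp: F_def)
  ultimately have mem: "finger_cost T pos0 F S \<in> {finger_cost T l F S | l F. length l = k \<and> set l \<subseteq> set_tree T \<and> length F = length S \<and> set F \<subseteq> {..<k}}"
    using lp lenF by blast
  have "LF_T k T S \<le> finger_cost T pos0 F S"
    unfolding LF_T_def by (rule cInf_lower[OF mem]) (rule bdd_belowI[of _ 0], simp)
  moreover have "LF k (k * Mp) S \<le> LF_T k T S"
    unfolding LF_def by (rule cInf_lower) (use bst_on_spn T_def in blast, rule bdd_belowI[of _ 0], simp)
  ultimately show ?thesis using fc unfolding S_def by simp
qed

end


datatype ctx = Hole nat | CLf | CN ctx nat ctx

primrec fill :: "ctx \<Rightarrow> (nat \<Rightarrow> nat tree) \<Rightarrow> nat tree" where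
  "fill (Hole i) U = U i"
| "fill CLf U = Leaf"
| "fill (CN C1 a C2) U = Node (fill C1 U) a (fill C2 U)"

primrec keys :: "ctx \<Rightarrow> nat set" where
  "keys (Hole i) = {}"
| "keys CLf = {}"
| "keys (CN C1 a C2) = keys C1 \<union> {a} \<union> keys C2"

primrec holes :: "ctx \<Rightarrow> nat set" where
  "holes (Hole i) = {i}"
| "holes CLf = {}"
| "holes (CN C1 a C2) = holes C1 \<union> holes C2"

primrec ncn :: "ctx \<Rightarrow> nat" where
  "ncn (Hole i) = 0"
| "ncn CLf = 0"
| "ncn (CN C1 a C2) = ncn C1 + 1 + ncn C2"

lemma set_fill: "set_tree (fill C U) = keys C \<union> (\<Union>i\<in>holes C. set_tree (U i))"
  by (induction C) auto

lemma finite_keys: "finite (keys C)" by (induction C) auto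

lemma card_keys: "card (keys C) \<le> ncn C"
proof (induction C)
  case (CN C1 a C2)
  have "card (keys C1 \<union> {a} \<union> keys C2) \<le> card (keys C1 \<union> {a}) + card (keys C2)" by (rule card_Un_le)
  also have "card (keys C1 \<union> {a}) \<le> card (keys C1) + card {a}" by (rule card_Un_le)
  finally show ?case using CN by simp
qed auto

lemma path_fill: "bst (fill C U) \<Longrightarrow> x \<in> keys C \<Longrightarrow> set (path (fill C U) x) \<subseteq> keys C"
proof (induction C)
  case (CN C1 a C2)
  have L: "\<forall>z\<in>set_tree (fill C1 U). z < a" and R: "\<forall>z\<in>set_tree (fill C2 U). a < z"
    using CN.prems(1) by auto
  have b1: "bst (fill C1 U)" "bst (fill C2 U)" using CN.prems(1) by auto
  show ?case
  proof (cases "x = a")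
    case True thus ?thesis by simp
  next
    case False
    show ?thesis
    proof (cases "x < a")
      case True
      have "\<forall>z\<in>keys C2. a < z" using R set_fill[of C2 U] by auto
      hence "x \<notin> keys C2" using True by auto
      hence "x \<in> keys C1" using CN.prems(2) False by auto
      thus ?thesis using True CN.IH(1)[OF b1(1)] by auto
    next
      case nlt: False
      have "\<forall>z\<in>keys C1. z < a" using L set_fill[of C1 U] by auto
      hence "x \<notin> keys C1" using nlt by auto
      hence "x \<in> keys C2" using CN.prems(2) False by auto
      moreover have "a < x" using nlt False by simp
      ultimately show ?thesis using CN.IH(2)[OF b1(2)] by auto
    qed
  qed
qed auto

lemma subtree_fill: "bst (fill C U) \<Longrightarrow> i \<in> holes C \<Longrightarrow> x \<in> set_tree (U i) \<Longrightarrow>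
  subtree_at (fill C U) x = subtree_at (U i) x"
proof (induction C)
  case (CN C1 a C2)
  have L: "\<forall>z\<in>set_tree (fill C1 U). z < a" and R: "\<forall>z\<in>set_tree (fill C2 U). a < z"
    using CN.prems(1) by auto
  have b1: "bst (fill C1 U)" "bst (fill C2 U)" using CN.prems(1) by auto
  show ?case
  proof (cases "i \<in> holes C1")
    case True
    hence "x \<in> set_tree (fill C1 U)" using CN.prems(3) set_fill[of C1 U] by auto
    hence "x < a" using L by auto
    thus ?thesis using CN.IH(1)[OF b1(1) True CN.prems(3)] by simp
  next
    case False
    hence i2: "i \<in> holes C2" using CN.prems(2) by simp
    hence "x \<in> set_tree (fill C2 U)" using CN.prems(3) set_fill[of C2 U] by auto
    hence "a < x" using R by auto
    thus ?thesis using CN.IH(2)[OF b1(2) i2 CN.prems(3)] by simp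
  qed
qed auto

lemma valid_ctx:
  assumes b: "bst (fill C U)" and b': "bst (fill C' U)"
    and st: "set_tree (fill C' U) = set_tree (fill C U)"
    and hs: "holes C \<subseteq> holes C'" and s: "s \<in> keys C"
  shows "valid_step (fill C U) s (keys C) (fill C' U)"
  unfolding valid_step_def
proof (intro conjI ballI)
  show "s \<in> keys C" by (rule s)
  show "keys C \<subseteq> set_tree (fill C U)" using set_fill[of C U] by auto
  show "\<And>x. x \<in> keys C \<Longrightarrow> set (path (fill C U) x) \<subseteq> keys C" using path_fill[OF b] by auto
  show "bst (fill C' U)" by (rule b')
  show "set_tree (fill C' U) = set_tree (fill C U)" by (rule st)
  fix x assume x: "x \<in> set_tree (fill C U) - keys C"
  then obtain i where i: "i \<in> holes C" "x \<in> set_tree (U i)" using set_fill[of C U] by auto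
  show "subtree_at (fill C' U) x = subtree_at (fill C U) x"
    using subtree_fill[OF b i] subtree_fill[OF b' _ i(2)] hs i(1) by auto
qed

lemma valid_root:
  assumes "bst (Node l a r)"
  shows "valid_step (Node l a r) a {a} (Node l a r)"
  unfolding valid_step_def using assms by auto

lemma valid_rot:
  assumes b: "bst (Node A x (Node B y C))"
  shows "valid_step (Node A x (Node B y C)) y {x, y} (Node (Node A x B) y C)"
proof -
  define U where "U i = (if i = 0 then A else if i = 1 then B else C)" for i :: nat
  define C1 where "C1 = CN (Hole 0) x (CN (Hole 1) y (Hole 2))"
  define C2 where "C2 = CN (CN (Hole 0) x (Hole 1)) y (Hole 2)"
  have f1: "fill C1 U = Node A x (Node B y C)" by (simp add: C1_def U_def)
  have f2: "fill C2 U = Node (Node A x B) y C" by (simp add: C2_def U_def)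
  have b2: "bst (Node (Node A x B) y C)" using b
    unfolding bst_iff_sorted_wrt_less by simp
  have k: "keys C1 = {x, y}" by (auto simp: C1_def)
  have "valid_step (fill C1 U) y (keys C1) (fill C2 U)"
  proof (rule valid_ctx)
    show "bst (fill C1 U)" unfolding f1 by (rule b)
    show "bst (fill C2 U)" unfolding f2 by (rule b2)
    show "set_tree (fill C2 U) = set_tree (fill C1 U)" unfolding f1 f2 by auto
    show "holes C1 \<subseteq> holes C2" by (simp add: C1_def C2_def)
    show "y \<in> keys C1" by (simp add: k)
  qed
  thus ?thesis using f1 f2 k by simp
qed

inductive run :: "nat tree \<Rightarrow> nat list \<Rightarrow> (nat set \<times> nat tree) list \<Rightarrow> nat tree \<Rightarrow> bool" where
  run_nil: "run T [] [] T"
| run_cons: "valid_step T s P T1 \<Longrightarrow> run T1 S R T2 \<Longrightarrow> run T (s # S) ((P, T1) # R) T2"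

lemma run_valid: "run T S R T' \<Longrightarrow> valid_exec T S R"
  by (induction rule: run.induct) auto

lemma run_app: "run T S1 R1 T1 \<Longrightarrow> run T1 S2 R2 T2 \<Longrightarrow> run T (S1 @ S2) (R1 @ R2) T2"
  by (induction rule: run.induct) (auto intro: run.intros)

lemma run_one: "valid_step T s P T1 \<Longrightarrow> run T [s] [(P, T1)] T1"
  by (auto intro: run.intros)

lemma exec_cost_Nil[simp]: "exec_cost [] = 0" by (simp add: exec_cost_def)
lemma exec_cost_Cons[simp]: "exec_cost ((P, T) # R) = card P + exec_cost R" by (simp add: exec_cost_def)
lemma exec_cost_app[simp]: "exec_cost (R1 @ R2) = exec_cost R1 + exec_cost R2" by (simp add: exec_cost_def)


lemma upt_app: "i \<le> j \<Longrightarrow> j \<le> l \<Longrightarrow> [i..<j] @ [j..<l] = [i..<l]"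
  using upt_add_eq_append[of i j "l - j"] by simp

fun lsp :: "nat \<Rightarrow> nat \<Rightarrow> nat tree" where
  "lsp lo 0 = Leaf"
| "lsp lo (Suc c) = Node (lsp lo c) (lo + c) Leaf"

lemma inorder_lsp: "inorder (lsp lo c) = [lo..<lo + c]"
  by (induction c) auto

fun rs :: "nat tree \<Rightarrow> (nat \<times> nat tree) list \<Rightarrow> nat tree" where
  "rs L [] = L"
| "rs L ((c, G) # xs) = Node L c (rs G xs)"

fun lc :: "nat tree \<Rightarrow> (nat \<times> nat tree) list \<Rightarrow> nat tree" where
  "lc L [] = L"
| "lc L ((c, G) # xs) = lc (Node L c G) xs"

definition iseq :: "(nat \<times> nat tree) list \<Rightarrow> nat list" where
  "iseq xs = concat (map (\<lambda>(c, G). c # inorder G) xs)"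

lemma iseq_simps[simp]: "iseq [] = []" "iseq ((c, G) # xs) = c # inorder G @ iseq xs"
  "iseq (xs @ ys) = iseq xs @ iseq ys"
  by (auto simp: iseq_def)

lemma inorder_rs: "inorder (rs L xs) = inorder L @ iseq xs"
  by (induction L xs rule: rs.induct) auto

lemma inorder_lc: "inorder (lc L xs) = inorder L @ iseq xs"
  by (induction L xs rule: lc.induct) auto

lemma lc_snoc: "lc L (xs @ [(c, G)]) = Node (lc L xs) c G"
  by (induction L xs rule: lc.induct) auto

fun rsC :: "ctx \<Rightarrow> (nat \<times> ctx) list \<Rightarrow> ctx" where
  "rsC L [] = L"
| "rsC L ((c, G) # xs) = CN L c (rsC G xs)"

fun lcC :: "ctx \<Rightarrow> (nat \<times> ctx) list \<Rightarrow> ctx" where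
  "lcC L [] = L"
| "lcC L ((c, G) # xs) = lcC (CN L c G) xs"

lemma fill_rsC: "fill (rsC L xs) U = rs (fill L U) (map (\<lambda>(c, G). (c, fill G U)) xs)"
  by (induction L xs rule: rsC.induct) auto

lemma fill_lcC: "fill (lcC L xs) U = lc (fill L U) (map (\<lambda>(c, G). (c, fill G U)) xs)"
  by (induction L xs rule: lcC.induct) auto

lemma holes_rsC: "holes (rsC L xs) = holes L \<union> (\<Union>p\<in>set xs. holes (snd p))"
  by (induction L xs rule: rsC.induct) auto

lemma holes_lcC: "holes (lcC L xs) = holes L \<union> (\<Union>p\<in>set xs. holes (snd p))"
  by (induction L xs rule: lcC.induct) auto

lemma ncn_lcC: "ncn (lcC L xs) = ncn L + sum_list (map (\<lambda>p. Suc (ncn (snd p))) xs)"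
  by (induction L xs rule: lcC.induct) auto

lemma keys_rsC: "keys (rsC L xs) \<supseteq> fst ` set xs"
  by (induction L xs rule: rsC.induct) auto

lemma inorder_bst_on: "inorder T = [1..<n + 1] \<Longrightarrow> bst_on n T"
proof -
  assume h: "inorder T = [1..<n + 1]"
  have "bst T" unfolding bst_iff_sorted_wrt_less h by (rule sorted_wrt_upt)
  moreover have "set_tree T = {1..n}" using h by (metis set_inorder set_upt atLeastLessThanSuc_atLeastAtMost Suc_eq_plus1)
  ultimately show ?thesis by (simp add: bst_on_def)
qed


context
  fixes k M Mp :: nat
  assumes k2: "k \<ge> 2" and MpM: "Mp = Suc M"
begin

definition cc :: "nat \<Rightarrow> nat \<Rightarrow> nat" where "cc j a = a * Mp + j + 1"

definition GG :: "nat \<Rightarrow> nat \<Rightarrow> nat tree" where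
  "GG j a = Node (spn (a * Mp + j + 2) (M - j - 1)) ((a + 1) * Mp)
      (if a + 1 < k then lsp ((a + 1) * Mp + 1) j else Leaf)"

definition pss :: "nat \<Rightarrow> (nat \<times> nat tree) list" where
  "pss j = map (\<lambda>a. (cc j a, GG j a)) [0..<k]"

definition St :: "nat \<Rightarrow> nat tree" where
  "St j = rs (lsp 1 j) (pss j)"

definition Mid :: "nat \<Rightarrow> nat \<Rightarrow> nat tree" where
  "Mid j i = Node (lc (lsp 1 j) (take i (pss j))) (cc j i) (rs (GG j i) (drop (Suc i) (pss j)))"

lemma length_pss[simp]: "length (pss j) = k" by (simp add: pss_def)
lemma pss_nth: "i < k \<Longrightarrow> pss j ! i = (cc j i, GG j i)" by (simp add: pss_def)

lemma piece: assumes "a < k" "j < M"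
  shows "cc j a # inorder (GG j a) =
    [a * Mp + j + 1..<(if a + 1 < k then (a + 1) * Mp + j + 1 else (a + 1) * Mp + 1)]"
proof -
  have e: "a * Mp + j + 2 + (M - j - 1) = (a + 1) * Mp" using assms MpM by simp
  have i1: "inorder (spn (a * Mp + j + 2) (M - j - 1)) = [a * Mp + j + 2..<(a + 1) * Mp]"
  proof -
    have "inorder (spn (a * Mp + j + 2) (M - j - 1)) = [a * Mp + j + 2..<a * Mp + j + 2 + (M - j - 1)]"
      by (rule inorder_spn)
    thus ?thesis by (simp only: e)
  qed
  have "cc j a # inorder (spn (a * Mp + j + 2) (M - j - 1)) @ [(a + 1) * Mp] = [a * Mp + j + 1..<(a + 1) * Mp + 1]"
  proof -
    have "a * Mp + j + 1 < (a + 1) * Mp + 1" using assms MpM by simp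
    hence "[a * Mp + j + 1..<(a + 1) * Mp + 1] = (a * Mp + j + 1) # [a * Mp + j + 2..<(a + 1) * Mp + 1]"
      by (simp add: upt_conv_Cons)
    moreover have "[a * Mp + j + 2..<(a + 1) * Mp + 1] = [a * Mp + j + 2..<(a + 1) * Mp] @ [(a + 1) * Mp]"
      using e by simp
    ultimately show ?thesis using i1 by (simp add: cc_def)
  qed
  moreover have "[a * Mp + j + 1..<(a + 1) * Mp + 1] @ [(a + 1) * Mp + 1..<(a + 1) * Mp + 1 + j] =
      [a * Mp + j + 1..<(a + 1) * Mp + j + 1]"
    using assms MpM by (subst upt_app) auto
  moreover have E: "cc j a # inorder (GG j a) = (cc j a # inorder (spn (a * Mp + j + 2) (M - j - 1)) @ [(a + 1) * Mp]) @
      inorder (if a + 1 < k then lsp ((a + 1) * Mp + 1) j else Leaf)"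
    by (simp add: GG_def)
  ultimately show ?thesis
    by (cases "a + 1 < k") (simp_all only: E inorder_lsp if_True if_False inorder.simps append_Nil2)
qed

lemma concat_pieces: assumes "j < M"
  shows "d \<le> k \<Longrightarrow> d \<ge> 1 \<Longrightarrow> iseq (map (\<lambda>a. (cc j a, GG j a)) [k - d..<k]) = [(k - d) * Mp + j + 1..<k * Mp + 1]"
proof (induction d)
  case 0 thus ?case by simp
next
  case (Suc d)
  show ?case
  proof (cases "d = 0")
    case True
    hence "k - Suc d = k - 1" by simp
    moreover have "[k - 1..<k] = [k - 1]" using k2 by (simp add: upt_conv_Cons)
    ultimately show ?thesis using piece[of "k - 1" j] assms k2 True by simp
  next
    case False
    define a where "a = k - Suc d"
    have a: "a < k" "a + 1 < k" "Suc a = k - d" using Suc.prems False by (auto simp: a_def)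
    have up: "[a..<k] = a # [k - d..<k]" using a by (simp add: upt_conv_Cons)
    have IH: "iseq (map (\<lambda>a. (cc j a, GG j a)) [k - d..<k]) = [(k - d) * Mp + j + 1..<k * Mp + 1]"
      using Suc False by simp
    have pc: "cc j a # inorder (GG j a) = [a * Mp + j + 1..<(a + 1) * Mp + j + 1]"
      using piece[OF a(1) assms] a(2) by simp
    have "k - d = a + 1" using a by simp
    hence "iseq (map (\<lambda>a. (cc j a, GG j a)) [a..<k]) = [a * Mp + j + 1..<(a + 1) * Mp + j + 1] @ [(a + 1) * Mp + j + 1..<k * Mp + 1]"
      using up IH pc by simp
    also have "\<dots> = [a * Mp + j + 1..<k * Mp + 1]"
    proof (rule upt_app)
      show "a * Mp + j + 1 \<le> (a + 1) * Mp + j + 1" by simp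
      have "(a + 2) * Mp \<le> k * Mp" using a(2) by (intro mult_le_mono1) simp
      thus "(a + 1) * Mp + j + 1 \<le> k * Mp + 1" using assms MpM by simp
    qed
    finally show ?thesis by (simp add: a_def)
  qed
qed

lemma inorder_St: assumes "j < M" shows "inorder (St j) = [1..<k * Mp + 1]"
proof -
  have "iseq (pss j) = [j + 1..<k * Mp + 1]"
    using concat_pieces[OF assms, of k] k2 by (simp add: pss_def)
  moreover have "[1..<1 + j] @ [j + 1..<k * Mp + 1] = [1..<k * Mp + 1]"
  proof -
    have "Mp \<le> k * Mp" using k2 by simp
    hence "j + 1 \<le> k * Mp + 1" using assms MpM by simp
    thus ?thesis using upt_app[of 1 "j + 1" "k * Mp + 1"] by (simp add: add.commute)
  qed
  ultimately show ?thesis by (simp add: St_def inorder_rs inorder_lsp)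
qed

lemma inorder_Mid: assumes "j < M" "i < k" shows "inorder (Mid j i) = [1..<k * Mp + 1]"
proof -
  have "pss j = take i (pss j) @ pss j ! i # drop (Suc i) (pss j)"
    using assms by (intro id_take_nth_drop) simp
  hence "iseq (pss j) = iseq (take i (pss j)) @ cc j i # inorder (GG j i) @ iseq (drop (Suc i) (pss j))"
    using pss_nth[OF assms(2)] by (metis iseq_simps(2,3))
  hence "inorder (Mid j i) = inorder (St j)"
    by (simp add: Mid_def St_def inorder_rs inorder_lc)
  thus ?thesis using inorder_St assms by simp
qed

lemma bst_St: "j < M \<Longrightarrow> bst_on (k * Mp) (St j)" using inorder_St inorder_bst_on by blast
lemma bst_Mid: "j < M \<Longrightarrow> i < k \<Longrightarrow> bst_on (k * Mp) (Mid j i)" using inorder_Mid inorder_bst_on by blast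

lemma St_Mid: "St j = Mid j 0"
proof -
  have "0 < length (pss j)" using k2 by simp
  hence "pss j ! 0 # drop (Suc 0) (pss j) = drop 0 (pss j)" by (rule Cons_nth_drop_Suc)
  hence "pss j = (cc j 0, GG j 0) # drop 1 (pss j)"
    using k2 pss_nth[of 0 j] by simp
  hence "St j = Node (lsp 1 j) (cc j 0) (rs (GG j 0) (drop 1 (pss j)))" unfolding St_def
    by (metis rs.simps(2))
  thus ?thesis by (simp add: Mid_def)
qed

lemma step_root: "j < M \<Longrightarrow> valid_step (St j) (cc j 0) {cc j 0} (St j)"
  using valid_root bst_Mid[of j 0] k2 St_Mid unfolding Mid_def bst_on_def by simp

lemma step_rot: assumes "j < M" "1 \<le> i" "i < k"
  shows "valid_step (Mid j (i - 1)) (cc j i) {cc j (i - 1), cc j i} (Mid j i)"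
proof -
  have d: "drop i (pss j) = (cc j i, GG j i) # drop (Suc i) (pss j)"
  proof -
    have "i < length (pss j)" using assms by simp
    hence "pss j ! i # drop (Suc i) (pss j) = drop i (pss j)" by (rule Cons_nth_drop_Suc)
    thus ?thesis using pss_nth[of i j] assms by simp
  qed
  have t: "take i (pss j) = take (i - 1) (pss j) @ [(cc j (i - 1), GG j (i - 1))]"
    using assms pss_nth[of "i - 1" j] by (metis Suc_diff_1 length_pss less_imp_diff_less less_le_trans take_Suc_conv_app_nth zero_less_one order.strict_trans2 less_one)
  have m1: "Mid j (i - 1) = Node (lc (lsp 1 j) (take (i - 1) (pss j))) (cc j (i - 1))
            (Node (GG j (i - 1)) (cc j i) (rs (GG j i) (drop (Suc i) (pss j))))"
    using d assms by (simp add: Mid_def)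
  have m2: "Mid j i = Node (Node (lc (lsp 1 j) (take (i - 1) (pss j))) (cc j (i - 1)) (GG j (i - 1))) (cc j i)
            (rs (GG j i) (drop (Suc i) (pss j)))"
    using t by (simp add: Mid_def lc_snoc)
  have b: "bst (Mid j (i - 1))" using bst_Mid assms unfolding bst_on_def by simp
  show ?thesis unfolding m1 m2 by (rule valid_rot) (use b m1 in simp)
qed


lemma step_trans: assumes jM: "j + 2 \<le> M"
  shows "\<exists>P. valid_step (Mid j (k - 2)) (cc j (k - 1)) P (St (Suc j)) \<and> card P \<le> 3 * k"
proof -
  define U where "U i = (if i = 0 then lsp 1 j else if odd i then spn ((i div 2) * Mp + j + 3) (M - j - 2)
      else (if i div 2 < k then lsp ((i div 2) * Mp + 1) j else Leaf))" for i :: nat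
  define gC where "gC a = CN (CN CLf (a * Mp + j + 2) (Hole (2 * a + 1))) ((a + 1) * Mp) (Hole (2 * a + 2))" for a
  define g'C where "g'C a = CN (Hole (2 * a + 1)) ((a + 1) * Mp)
      (if a + 1 < k then CN (Hole (2 * a + 2)) (cc j (a + 1)) CLf else Hole (2 * a + 2))" for a
  define cps where "cps = map (\<lambda>a. (cc j a, gC a)) [0..<k]"
  define C where "C = CN (lcC (Hole 0) (take (k - 2) cps)) (cc j (k - 2)) (CN (gC (k - 2)) (cc j (k - 1)) (gC (k - 1)))"
  define C' where "C' = rsC (CN (Hole 0) (cc j 0) CLf) (map (\<lambda>a. (cc (Suc j) a, g'C a)) [0..<k])"
  have Msp: "M - j - 1 = Suc (M - j - 2)" using jM by simp
  have fg: "fill (gC a) U = GG j a" for a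
  proof -
    have "U (2 * a + 1) = spn (a * Mp + j + 3) (M - j - 2)" by (simp add: U_def)
    moreover have "U (2 * a + 2) = (if a + 1 < k then lsp ((a + 1) * Mp + 1) j else Leaf)"
      by (simp add: U_def)
    moreover have "a * Mp + j + 3 = Suc (a * Mp + j + 2)" by simp
    ultimately show ?thesis unfolding gC_def GG_def Msp by (simp only: fill.simps spn.simps)
  qed
  have fg': "fill (g'C a) U = GG (Suc j) a" for a
  proof -
    have "U (2 * a + 1) = spn (a * Mp + j + 3) (M - j - 2)" by (simp add: U_def)
    moreover have "U (2 * a + 2) = (if a + 1 < k then lsp ((a + 1) * Mp + 1) j else Leaf)"
      by (simp add: U_def)
    moreover have "M - Suc j - 1 = M - j - 2" by simp
    moreover have "a * Mp + Suc j + 2 = a * Mp + j + 3" by simp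
    ultimately show ?thesis unfolding g'C_def GG_def by (simp add: cc_def algebra_simps eval_nat_numeral)
  qed
  have fcps: "map (\<lambda>(c, G). (c, fill G U)) cps = pss j"
    by (simp add: cps_def pss_def fg)
  have dk: "drop (k - 1) (pss j) = [(cc j (k - 1), GG j (k - 1))]"
  proof -
    have "k - 1 < length (pss j)" using k2 by simp
    hence "pss j ! (k - 1) # drop (Suc (k - 1)) (pss j) = drop (k - 1) (pss j)" by (rule Cons_nth_drop_Suc)
    thus ?thesis using pss_nth[of "k - 1" j] k2 by simp
  qed
  have fC: "fill C U = Mid j (k - 2)"
  proof -
    have "fill C U = Node (lc (lsp 1 j) (take (k - 2) (pss j))) (cc j (k - 2))
        (Node (GG j (k - 2)) (cc j (k - 1)) (GG j (k - 1)))"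
      unfolding C_def by (simp add: fill_lcC fg U_def take_map[symmetric] fcps)
    moreover have "Suc (k - 2) = k - 1" using k2 by simp
    ultimately show ?thesis unfolding Mid_def using dk by simp
  qed
  have fC': "fill C' U = St (Suc j)"
  proof -
    have "map (\<lambda>(c, G). (c, fill G U)) (map (\<lambda>a. (cc (Suc j) a, g'C a)) [0..<k]) = pss (Suc j)"
      by (simp add: pss_def fg')
    moreover have "fill (CN (Hole 0) (cc j 0) CLf) U = lsp 1 (Suc j)" by (simp add: U_def cc_def)
    ultimately show ?thesis unfolding C'_def St_def fill_rsC by simp
  qed
  have hC: "holes C \<subseteq> holes C'"
  proof -
    have hg: "holes (gC a) = {2 * a + 1, 2 * a + 2}" for a by (auto simp: gC_def)
    have hg': "holes (g'C a) = {2 * a + 1, 2 * a + 2}" for a by (auto simp: g'C_def)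
    have "holes C' = {0} \<union> (\<Union>a\<in>{..<k}. {2 * a + 1, 2 * a + 2})"
      unfolding C'_def holes_rsC by (auto simp: hg')
    moreover have "holes C \<subseteq> {0} \<union> (\<Union>a\<in>{..<k}. {2 * a + 1, 2 * a + 2})"
    proof -
      have "set (take (k - 2) cps) \<subseteq> set cps" by (rule set_take_subset)
      have "\<forall>p\<in>set (take (k - 2) cps). holes (snd p) \<subseteq> (\<Union>a\<in>{..<k}. {2 * a + 1, 2 * a + 2})"
      proof
        fix p assume "p \<in> set (take (k - 2) cps)"
        hence "p \<in> set cps" using \<open>set (take (k - 2) cps) \<subseteq> set cps\<close> by blast
        then obtain a where a: "a < k" "p = (cc j a, gC a)" by (auto simp: cps_def)
        show "holes (snd p) \<subseteq> (\<Union>a\<in>{..<k}. {2 * a + 1, 2 * a + 2})"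
          using a hg[of a] by auto
      qed
      moreover have "k - 2 < k" "k - 1 < k" using k2 by auto
      ultimately show ?thesis unfolding C_def using hg by (auto simp: holes_lcC)
    qed
    ultimately show ?thesis by simp
  qed
  have vs: "valid_step (fill C U) (cc j (k - 1)) (keys C) (fill C' U)"
  proof (rule valid_ctx)
    show "bst (fill C U)" unfolding fC using bst_Mid[of j "k - 2"] jM k2 by (simp add: bst_on_def)
    show "bst (fill C' U)" unfolding fC' using bst_St[of "Suc j"] jM by (simp add: bst_on_def)
    show "set_tree (fill C' U) = set_tree (fill C U)" unfolding fC fC'
      using bst_St[of "Suc j"] bst_Mid[of j "k - 2"] jM k2 by (simp add: bst_on_def)
    show "holes C \<subseteq> holes C'" by (rule hC)
    show "cc j (k - 1) \<in> keys C" by (simp add: C_def)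
  qed
  have nc: "ncn C \<le> 3 * k"
  proof -
    have "sum_list (map (\<lambda>p. Suc (ncn (snd p))) (take (k - 2) cps)) \<le> 3 * length (take (k - 2) cps)"
    proof (rule sum_list_le_const, rule ballI)
      fix p assume "p \<in> set (take (k - 2) cps)"
      hence "p \<in> set cps" by (meson in_set_takeD)
      then obtain a where a: "p = (cc j a, gC a)" by (auto simp: cps_def)
      show "Suc (ncn (snd p)) \<le> 3" by (simp add: a gC_def)
    qed
    moreover have "length (take (k - 2) cps) = k - 2" using k2 by (simp add: cps_def)
    ultimately show ?thesis unfolding C_def using k2 by (simp add: ncn_lcC gC_def)
  qed
  show ?thesis using vs fC fC' card_keys[of C] nc by (intro exI[of _ "keys C"]) simp
qed


lemma card2: "card {x, y :: nat} \<le> 2" by (simp add: card_insert_if)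

lemma rot_chain: assumes jM: "j < M"
  shows "i < k \<Longrightarrow> \<exists>R. run (Mid j 0) (map (cc j) [1..<Suc i]) R (Mid j i) \<and> exec_cost R \<le> 2 * i"
proof (induction i)
  case 0 show ?case by (intro exI[of _ "[]"]) (simp add: run_nil)
next
  case (Suc i)
  obtain R where R: "run (Mid j 0) (map (cc j) [1..<Suc i]) R (Mid j i)" "exec_cost R \<le> 2 * i"
    using Suc by auto
  have v: "valid_step (Mid j i) (cc j (Suc i)) {cc j i, cc j (Suc i)} (Mid j (Suc i))"
    using step_rot[OF jM, of "Suc i"] Suc.prems by simp
  have r: "run (Mid j 0) (map (cc j) [1..<Suc i] @ [cc j (Suc i)]) (R @ [({cc j i, cc j (Suc i)}, Mid j (Suc i))]) (Mid j (Suc i))"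
    by (rule run_app[OF R(1) run_one[OF v]])
  have "map (cc j) [1..<Suc (Suc i)] = map (cc j) [1..<Suc i] @ [cc j (Suc i)]" by simp
  thus ?case using r R(2) card2[of "cc j i" "cc j (Suc i)"]
    by (intro exI[of _ "R @ [({cc j i, cc j (Suc i)}, Mid j (Suc i))]"]) simp
qed

lemma blk_cc: "blk k Mp j = map (cc j) [0..<k]" by (simp add: blk_def cc_def)

lemma round_run: assumes jM: "j < M"
  shows "\<exists>R T'. run (St j) (blk k Mp j) R T' \<and> exec_cost R \<le> 5 * k \<and> (j + 2 \<le> M \<longrightarrow> T' = St (Suc j))"
proof -
  obtain m where km: "k = Suc (Suc m)" using k2 by (metis add_2_eq_Suc le_Suc_ex)
  have up: "[0..<k] = 0 # [1..<Suc (k - 2)] @ [k - 1]"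
  proof -
    have "[0..<Suc (Suc m)] = [0..<Suc m] @ [Suc m]" by simp
    moreover have "[0..<Suc m] = 0 # [1..<Suc m]" by (simp add: upt_conv_Cons)
    ultimately show ?thesis using km by simp
  qed
  have r0: "run (St j) [cc j 0] [({cc j 0}, St j)] (St j)" by (rule run_one[OF step_root[OF jM]])
  obtain R1 where R1: "run (Mid j 0) (map (cc j) [1..<Suc (k - 2)]) R1 (Mid j (k - 2))" "exec_cost R1 \<le> 2 * (k - 2)"
    using rot_chain[OF jM, of "k - 2"] k2 by auto
  have r01: "run (St j) ([cc j 0] @ map (cc j) [1..<Suc (k - 2)]) ([({cc j 0}, St j)] @ R1) (Mid j (k - 2))"
    using run_app[OF r0] R1(1) St_Mid by simp
  have bl: "blk k Mp j = ([cc j 0] @ map (cc j) [1..<Suc (k - 2)]) @ [cc j (k - 1)]"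
    unfolding blk_cc by (subst up) simp
  show ?thesis
  proof (cases "j + 2 \<le> M")
    case True
    obtain P where P: "valid_step (Mid j (k - 2)) (cc j (k - 1)) P (St (Suc j))" "card P \<le> 3 * k"
      using step_trans[OF True] by auto
    have "run (St j) (blk k Mp j) (([({cc j 0}, St j)] @ R1) @ [(P, St (Suc j))]) (St (Suc j))"
      unfolding bl by (rule run_app[OF r01 run_one[OF P(1)]])
    moreover have "exec_cost (([({cc j 0}, St j)] @ R1) @ [(P, St (Suc j))]) \<le> 5 * k"
      using R1(2) P(2) k2 by simp
    ultimately show ?thesis using True by blast
  next
    case False
    have v: "valid_step (Mid j (k - 2)) (cc j (k - 1)) {cc j (k - 2), cc j (k - 1)} (Mid j (k - 1))"
      using step_rot[OF jM, of "k - 1"] k2 by (simp add: numeral_2_eq_2)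
    have "run (St j) (blk k Mp j) (([({cc j 0}, St j)] @ R1) @ [({cc j (k - 2), cc j (k - 1)}, Mid j (k - 1))]) (Mid j (k - 1))"
      unfolding bl by (rule run_app[OF r01 run_one[OF v]])
    moreover have "exec_cost (([({cc j 0}, St j)] @ R1) @ [({cc j (k - 2), cc j (k - 1)}, Mid j (k - 1))]) \<le> 5 * k"
      using R1(2) card2[of "cc j (k - 2)" "cc j (k - 1)"] k2 by simp
    ultimately show ?thesis using False by blast
  qed
qed

lemma all_rounds: "j < M \<Longrightarrow> \<exists>R. run (St 0) (concat (map (blk k Mp) [0..<j])) R (St j) \<and> exec_cost R \<le> 5 * k * j"
proof (induction j)
  case 0 show ?case by (intro exI[of _ "[]"]) (simp add: run_nil)
next
  case (Suc j)
  obtain R where R: "run (St 0) (concat (map (blk k Mp) [0..<j])) R (St j)" "exec_cost R \<le> 5 * k * j"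
    using Suc by auto
  obtain R' T' where R': "run (St j) (blk k Mp j) R' T'" "exec_cost R' \<le> 5 * k" "j + 2 \<le> M \<longrightarrow> T' = St (Suc j)"
    using round_run[of j] Suc.prems by auto
  have "T' = St (Suc j)" using R'(3) Suc.prems by simp
  hence "run (St 0) (concat (map (blk k Mp) [0..<j]) @ blk k Mp j) (R @ R') (St (Suc j))"
    using run_app[OF R(1) R'(1)] by simp
  thus ?case using R(2) R'(2) by (intro exI[of _ "R @ R'"]) (simp add: algebra_simps)
qed

lemma full_run: assumes M1: "M \<ge> 1"
  shows "\<exists>R T'. run (St 0) (replicate k 1 @ concat (map (blk k Mp) [0..<M])) R T' \<and> exec_cost R \<le> 5 * (k * Mp)"
proof -
  have v0: "valid_step (St 0) 1 {1} (St 0)" using step_root[of 0] M1 by (simp add: cc_def)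
  have pre: "run (St 0) (replicate c 1) (replicate c ({1}, St 0)) (St 0)" for c
  proof (induction c)
    case 0 show ?case by (simp add: run_nil)
  next
    case (Suc c) show ?case using run_cons[OF v0 Suc.IH] by simp
  qed
  have cpre: "exec_cost (replicate c ({1::nat}, St 0)) = c" for c by (induction c) auto
  obtain R where R: "run (St 0) (concat (map (blk k Mp) [0..<M - 1])) R (St (M - 1))" "exec_cost R \<le> 5 * k * (M - 1)"
    using all_rounds[of "M - 1"] M1 by auto
  obtain R' T' where R': "run (St (M - 1)) (blk k Mp (M - 1)) R' T'" "exec_cost R' \<le> 5 * k"
    using round_run[of "M - 1"] M1 by auto
  have "concat (map (blk k Mp) [0..<M]) = concat (map (blk k Mp) [0..<M - 1]) @ blk k Mp (M - 1)"
  proof -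
    obtain m where "M = Suc m" using M1 by (cases M) auto
    thus ?thesis by simp
  qed
  hence "run (St 0) (replicate k 1 @ concat (map (blk k Mp) [0..<M])) (replicate k ({1}, St 0) @ R @ R') T'"
    using run_app[OF pre run_app[OF R(1) R'(1)]] by simp
  moreover have "exec_cost (replicate k ({1}, St 0) @ R @ R') \<le> 5 * (k * Mp)"
  proof -
    have "exec_cost (replicate k ({1}, St 0) @ R @ R') \<le> k + 5 * k * (M - 1) + 5 * k"
      using R(2) R'(2) cpre[of k] by simp
    also have "\<dots> \<le> 5 * (k * Mp)" using M1 MpM by (cases M) (auto simp: algebra_simps)
    finally show ?thesis .
  qed
  ultimately show ?thesis by blast
qed


lemma OPT_ub: assumes M1: "M \<ge> 1"
  shows "OPT (k * Mp) (replicate k 1 @ concat (map (blk k Mp) [0..<M])) \<le> 5 * (k * Mp)"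
proof -
  obtain R T' where R: "run (St 0) (replicate k 1 @ concat (map (blk k Mp) [0..<M])) R T'" "exec_cost R \<le> 5 * (k * Mp)"
    using full_run[OF M1] by auto
  have "bst_on (k * Mp) (St 0)" using bst_St[of 0] M1 by simp
  hence mem: "exec_cost R \<in> {exec_cost R | T0 R. bst_on (k * Mp) T0 \<and> valid_exec T0 (replicate k 1 @ concat (map (blk k Mp) [0..<M])) R}"
    using run_valid[OF R(1)] by blast
  have "OPT (k * Mp) (replicate k 1 @ concat (map (blk k Mp) [0..<M])) \<le> exec_cost R"
    unfolding OPT_def by (rule cInf_lower[OF mem]) (rule bdd_belowI[of _ 0], simp)
  thus ?thesis using R(2) by simp
qed

end


lemma ne_if_mem: "x \<in> A \<Longrightarrow> A \<noteq> {}" by auto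

lemma LF_lb:
  assumes k: "k \<ge> 2" and Mp: "M < Mp" and L: "L \<ge> 3" and M: "M = 2 * k * k * L"
  shows "real (LF (k - 1) (k * Mp) (replicate k 1 @ concat (map (blk k Mp) [0..<M]))) \<ge> real M / 4 * (ln (real L) - 1)"
proof -
  define S where "S = replicate k 1 @ concat (map (blk k Mp) [0..<M])"
  define n where "n = k * Mp"
  have n1: "n \<ge> 1" using k Mp by (simp add: n_def)
  define A where "A = {LF_T (k - 1) T S | T. bst_on n T}"
  have "LF_T (k - 1) (spn 1 n) S \<in> A" unfolding A_def using bst_on_spn[of n] by (simp only: mem_Collect_eq) blast
  hence "A \<noteq> {}" by (rule ne_if_mem)
  hence "Inf A \<in> A" by (rule Inf_nat_def1)
  hence "\<exists>T. Inf A = LF_T (k - 1) T S \<and> bst_on n T" unfolding A_def by (simp only: mem_Collect_eq)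
  moreover have "LF (k - 1) n S = Inf A" by (simp add: LF_def A_def)
  ultimately obtain T where T: "bst_on n T" "LF (k - 1) n S = LF_T (k - 1) T S" by auto
  have sT: "set_tree T = {1..n}" and bT: "bst T" using T(1) by (auto simp: bst_on_def)
  define B where "B = {finger_cost T l F S | l F. length l = k - 1 \<and> set l \<subseteq> set_tree T \<and> length F = length S \<and> set F \<subseteq> {..<k - 1}}"
  have "(1::nat) \<in> set_tree T" using sT n1 by simp
  hence r1: "set (replicate (k - 1) (1::nat)) \<subseteq> set_tree T" by (simp add: set_replicate_conv_if)
  have "(0::nat) \<in> {..<k - 1}" using k by simp
  hence r2: "set (replicate (length S) (0::nat)) \<subseteq> {..<k - 1}" by (simp add: set_replicate_conv_if)
  have "\<exists>l F. finger_cost T (replicate (k - 1) 1) (replicate (length S) 0) S = finger_cost T l F S \<and>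
      length l = k - 1 \<and> set l \<subseteq> set_tree T \<and> length F = length S \<and> set F \<subseteq> {..<k - 1}"
    by (rule exI[of _ "replicate (k - 1) 1"], rule exI[of _ "replicate (length S) 0"]) (simp only: r1 r2 length_replicate simp_thms)
  hence "finger_cost T (replicate (k - 1) 1) (replicate (length S) 0) S \<in> B"
    unfolding B_def by (simp only: mem_Collect_eq)
  hence "B \<noteq> {}" by (rule ne_if_mem)
  hence "Inf B \<in> B" by (rule Inf_nat_def1)
  hence "\<exists>l F. Inf B = finger_cost T l F S \<and> length l = k - 1 \<and> set l \<subseteq> set_tree T \<and> length F = length S \<and> set F \<subseteq> {..<k - 1}"
    unfolding B_def by (simp only: mem_Collect_eq)
  moreover have "LF_T (k - 1) T S = Inf B" by (simp add: LF_T_def B_def)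
  ultimately obtain l F where lF: "length l = k - 1" "length F = length S" "set F \<subseteq> {..<k - 1}"
      "LF_T (k - 1) T S = finger_cost T l F S" by auto
  define F1 where "F1 = take k F"
  define F2 where "F2 = drop k F"
  have FF: "F = F1 @ F2" by (simp add: F1_def F2_def)
  have lS: "length S = k + k * M" by (simp add: S_def length_concat_blk)
  have lF1: "length F1 = length (replicate k (1::nat))" using lF(2) lS by (simp add: F1_def)
  have E: "finger_cost T l F S = finger_cost T l F1 (replicate k 1) + finger_cost T (upd l F1 (replicate k 1)) F2 (concat (map (blk k Mp) [0..<M]))"
    unfolding S_def FF by (rule fc_append[OF lF1])
  have G: "(\<Sum>j\<leftarrow>[0..<M]. mn T k Mp j) \<le> finger_cost T (upd l F1 (replicate k 1)) F2 (concat (map (blk k Mp) [0..<M]))"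
  proof (rule rounds_lb)
    show "2 \<le> k" by (rule k)
    show "1 \<le> Mp" using Mp by simp
    show "length (upd l F1 (replicate k 1)) = k - 1" using lF(1) by simp
    show "length F2 = length (concat (map (blk k Mp) [0..<M]))"
      using lF(2) lS by (simp add: F2_def length_concat_blk)
    show "\<forall>f\<in>set F2. f < k - 1" using lF(3) FF by auto
  qed
  have c0: "(\<Sum>j\<leftarrow>[0..<M]. mn T k Mp j) \<le> LF (k - 1) n S"
    unfolding T(2) lF(4) E by (rule trans_le_add2[OF G])
  have "(\<Sum>j\<leftarrow>[0..<M]. mn T k Mp j) = (\<Sum>j<M. mn T k Mp j)"
    by (simp only: interv_sum_list_conv_sum_set_nat set_upt lessThan_atLeast0)
  hence c1: "(\<Sum>j<M. mn T k Mp j) \<le> LF (k - 1) n S" using c0 by simp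
  have "real (\<Sum>j<M. mn T k Mp j) \<ge> real M / 4 * (ln (real L) - 1)"
  proof (rule classes_lb[OF bT k Mp _ L M])
    fix a j assume a: "a < k" "j < M"
    have "a * Mp + Mp \<le> k * Mp" using a(1) by (metis Suc_leI add.commute mult_Suc mult_le_mono1)
    thus "a * Mp + j + 1 \<in> set_tree T" using a Mp by (simp add: sT n_def)
  qed
  moreover have "real (\<Sum>j<M. mn T k Mp j) \<le> real (LF (k - 1) n S)" using c1 by (simp only: of_nat_le_iff)
  ultimately show ?thesis unfolding S_def n_def by (rule order_trans)
qed

lemma nth_concat_blk: "q < k * m \<Longrightarrow> concat (map (blk k Mp) [0..<m]) ! q = (q mod k) * Mp + q div k + 1"
proof (induction m)
  case 0 thus ?case by simp
next
  case (Suc m)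
  have l: "length (concat (map (blk k Mp) [0..<m])) = k * m" by (simp add: length_concat_blk)
  show ?case
  proof (cases "q < k * m")
    case True thus ?thesis using Suc by (simp add: nth_append l)
  next
    case False
    define r where "r = q - k * m"
    have r: "r < k" "q = r + k * m" using False Suc.prems by (auto simp: r_def)
    have kp: "k > 0" using r by simp
    have "q div k = m" "q mod k = r" using r kp by auto
    moreover have "concat (map (blk k Mp) [0..<Suc m]) ! q = blk k Mp m ! r"
      using False l by (simp add: nth_append r_def)
    moreover have "blk k Mp m ! r = r * Mp + m + 1" using r by (simp add: blk_def)
    ultimately show ?thesis by simp
  qed
qed

lemma avoid_S:
  assumes k: "k \<ge> 2" and Mp: "M < Mp"
  shows "avoids (replicate k 1 @ concat (map (blk k Mp) [0..<M])) (rev [1..<k + 2])"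
proof -
  define S where "S = replicate k 1 @ concat (map (blk k Mp) [0..<M])"
  have lS: "length S = k + k * M" by (simp add: S_def length_concat_blk)
  have nthS: "S ! p = (if p < k then 1 else ((p - k) mod k) * Mp + (p - k) div k + 1)" if "p < length S" for p
    using that lS nth_concat_blk[of "p - k" k M Mp] by (auto simp: S_def nth_append)
  define tr where "tr v = (v - 1) div Mp" for v
  have trS: "tr (S ! p) = (if p < k then 0 else (p - k) mod k)" if "p < length S" for p
  proof (cases "p < k")
    case True thus ?thesis using nthS[OF that] by (simp add: tr_def)
  next
    case False
    have "(p - k) div k < M" using that lS False k
      by (simp add: less_mult_imp_div_less less_diff_conv2 algebra_simps)
    hence "(p - k) div k < Mp" using Mp by simp
    thus ?thesis using nthS[OF that] False by (simp add: tr_def)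
  qed
  have trk: "tr (S ! p) < k" if "p < length S" for p using trS[OF that] k by auto
  have S1: "S ! p \<ge> 1" if "p < length S" for p using nthS[OF that] by simp
  have mono: "S ! p1 \<le> S ! p2" if "p1 < p2" "p2 < length S" "tr (S ! p1) = tr (S ! p2)" for p1 p2
  proof (cases "p1 < k")
    case True thus ?thesis using nthS[of p1] S1[OF that(2)] that by simp
  next
    case False
    hence f2: "\<not> p2 < k" using that by simp
    have md: "(p1 - k) mod k = (p2 - k) mod k" using that(3) trS[of p1] trS[of p2] False f2 that by simp
    have "p1 - k < p2 - k" using that False by simp
    hence "(p1 - k) div k \<le> (p2 - k) div k" by (simp add: div_le_mono)
    thus ?thesis using nthS[of p1] nthS[of p2] that False f2 md by simp
  qed
  show ?thesis unfolding avoids_def contains_pattern_def S_def[symmetric]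
  proof
    assume "\<exists>is. length is = length (rev [1..<k + 2]) \<and> sorted_wrt (<) is \<and> (\<forall>i\<in>set is. i < length S) \<and>
      (\<forall>a<length (rev [1..<k + 2]). \<forall>b<length (rev [1..<k + 2]).
          (S ! (is ! a) < S ! (is ! b)) = (rev [1..<k + 2] ! a < rev [1..<k + 2] ! b))"
    then obtain ps where isP0: "length ps = length (rev [1..<k + 2])" "sorted_wrt (<) ps" "\<forall>i\<in>set ps. i < length S"
      "\<forall>a<length (rev [1..<k + 2]). \<forall>b<length (rev [1..<k + 2]).
          (S ! (ps ! a) < S ! (ps ! b)) = (rev [1..<k + 2] ! a < rev [1..<k + 2] ! b)"
      by blast
    have len: "length (rev [1..<k + 2]) = k + 1" by simp
    have isP: "length ps = k + 1" "sorted_wrt (<) ps" "\<forall>i\<in>set ps. i < length S"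
      "\<forall>a<k + 1. \<forall>b<k + 1. (S ! (ps ! a) < S ! (ps ! b)) = (rev [1..<k + 2] ! a < rev [1..<k + 2] ! b)"
      using isP0 unfolding len by auto
    have pat: "rev [1..<k + 2] ! a = k + 1 - a" if "a < k + 1" for a
    proof -
      have "rev [1..<k + 2] ! a = [1..<k + 2] ! (length [1..<k + 2] - Suc a)"
        by (rule rev_nth) (use that in simp)
      also have "length [1..<k + 2] - Suc a = k - a" using that by simp
      also have "[1..<k + 2] ! (k - a) = 1 + (k - a)" by (rule nth_upt) (use that in simp)
      finally show ?thesis using that by simp
    qed
    have dec: "S ! (ps ! b) < S ! (ps ! a)" if "a < b" "b < k + 1" for a b
      using isP(4) that pat by auto
    have inj: "inj_on (\<lambda>a. tr (S ! (ps ! a))) {..<k + 1}"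
    proof (rule inj_onI)
      fix a b assume a: "a \<in> {..<k + 1}" "b \<in> {..<k + 1}" "tr (S ! (ps ! a)) = tr (S ! (ps ! b))"
      show "a = b"
      proof (rule ccontr)
        assume "a \<noteq> b"
        then consider "a < b" | "b < a" by linarith
        thus False
        proof cases
          case 1
          have "ps ! a < ps ! b" using isP(1,2) 1 a by (simp add: sorted_wrt_iff_nth_less)
          moreover have "ps ! b < length S" using isP(1,3) a by auto
          ultimately have "S ! (ps ! a) \<le> S ! (ps ! b)" using mono a(3) by blast
          thus False using dec[OF 1] a by simp
        next
          case 2
          have "ps ! b < ps ! a" using isP(1,2) 2 a by (simp add: sorted_wrt_iff_nth_less)
          moreover have "ps ! a < length S" using isP(1,3) a by auto
          ultimately have "S ! (ps ! b) \<le> S ! (ps ! a)" using mono a(3) by metis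
          thus False using dec[OF 2] a by simp
        qed
      qed
    qed
    have "(\<lambda>a. tr (S ! (ps ! a))) ` {..<k + 1} \<subseteq> {..<k}"
      using trk isP(1,3) by auto
    hence "card {..<k + 1} \<le> card {..<k}" using card_inj_on_le[OF inj, of "{..<k}"] by simp
    thus False by simp
  qed
qed


lemma numeric:
  assumes k: "k \<ge> 2" and R: "R \<ge> 16" and L: "L = 2 * k * k * R" and M: "M = 2 * k * k * L"
  shows "ln 2 / 32 * real (Suc M) * log 2 (real (Suc M)) \<le> real M / 4 * (ln (real L) - 1)"
proof -
  have kk: "k * k \<ge> 4" using k mult_le_mono[OF k k] by simp
  have L128: "L \<ge> 128" using L kk R mult_le_mono[OF kk R] by (simp add: mult.commute mult.left_commute)
  have e4: "exp (4::real) \<le> 81"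
  proof -
    have "exp (4::real) = exp 1 ^ 4" using exp_of_nat_mult[of 4 "1::real"] by simp
    also have "\<dots> \<le> 3 ^ 4" by (rule power_mono[OF exp_le]) simp
    finally show ?thesis by simp
  qed
  have lnL4: "ln (real L) \<ge> 4"
  proof -
    have "exp 4 \<le> real L" using e4 L128 by linarith
    thus ?thesis using L128 by (subst ln_ge_iff) auto
  qed
  have Lpos: "real L > 0" using L128 by simp
  have hML: "M \<le> L * L"
  proof -
    have "2 * k * k * 1 \<le> 2 * k * k * R" by (rule mult_le_mono2) (use R in simp)
    hence "2 * k * k \<le> L" using L by simp
    thus ?thesis using M by simp
  qed
  have SM3: "real (Suc M) \<le> real L ^ 3"
  proof -
    have "Suc M \<le> L * L + 1" using hML by simp
    also have "\<dots> \<le> L * L * L"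
    proof -
      have "L * L \<ge> 1" using L128 by simp
      moreover have "L * L * L \<ge> L * L * 2" using L128 by (intro mult_le_mono2) simp
      ultimately show ?thesis by linarith
    qed
    finally have "Suc M \<le> L ^ 3" by (simp add: power3_eq_cube)
    thus ?thesis by (metis of_nat_le_iff of_nat_power)
  qed
  have lnSM: "ln (real (Suc M)) \<le> 3 * ln (real L)"
  proof -
    have "ln (real (Suc M)) \<le> ln (real L ^ 3)" using SM3 Lpos by (subst ln_le_cancel_iff) auto
    also have "\<dots> = 3 * ln (real L)" using Lpos by (simp add: ln_realpow)
    finally show ?thesis .
  qed
  have M1: "M \<ge> 1" using M L128 kk k by simp
  have SM2: "real (Suc M) \<le> 2 * real M" using M1 by simp
  have lnSMpos: "ln (real (Suc M)) \<ge> 0" by simp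
  have "ln 2 / 32 * real (Suc M) * log 2 (real (Suc M)) = real (Suc M) * ln (real (Suc M)) / 32"
    by (simp add: log_def)
  also have "\<dots> \<le> (2 * real M) * (3 * ln (real L)) / 32"
    using SM2 lnSM lnSMpos by (intro divide_right_mono mult_mono) auto
  also have "\<dots> = real M / 4 * (3 / 4 * ln (real L))" by simp
  also have "\<dots> \<le> real M / 4 * (ln (real L) - 1)"
    using lnL4 by (intro mult_left_mono) auto
  finally show ?thesis .
qed

theorem mainTheorem13:
  shows "\<exists>c1 c2 :: real. c1 > 0 \<and> c2 > 0 \<and>
    (\<forall>k::nat. k \<ge> 2 \<longrightarrow>
      infinite {n::nat. \<exists>S. length S = n \<and> set S \<subseteq> {1..n} \<and>
         real (LF (k - 1) n S) \<ge> c1 * (real n / real k) * log 2 (real n / real k) \<and>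
         real (LF k n S) \<le> c2 * real n \<and>
         avoids S (rev [1..<k + 2]) \<and>
         real (OPT n S) \<le> c2 * real n})"
proof (intro exI conjI allI impI)
  show "(0::real) < ln 2 / 32" by simp
  show "(0::real) < 5" by simp
  fix k :: nat assume k: "2 \<le> k"
  define f where "f R = k * Suc (2 * k * k * (2 * k * k * R))" for R
  have good: "f R \<in> {n::nat. \<exists>S. length S = n \<and> set S \<subseteq> {1..n} \<and>
         real (LF (k - 1) n S) \<ge> ln 2 / 32 * (real n / real k) * log 2 (real n / real k) \<and>
         real (LF k n S) \<le> 5 * real n \<and>
         avoids S (rev [1..<k + 2]) \<and>
         real (OPT n S) \<le> 5 * real n}" if R: "R \<ge> 16" for R
  proof -
    define L where "L = 2 * k * k * R"
    define M where "M = 2 * k * k * L"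
    define Mp where "Mp = Suc M"
    define S where "S = replicate k 1 @ concat (map (blk k Mp) [0..<M])"
    have n: "f R = k * Mp" by (simp add: f_def Mp_def M_def L_def)
    have kk: "k * k \<ge> 4" using k mult_le_mono[OF k k] by simp
    have L3: "L \<ge> 3" using L_def kk R mult_le_mono[OF kk R] by (simp add: mult.commute mult.left_commute)
    have M1: "M \<ge> 1" using M_def L3 kk k by simp
    have MMp: "M < Mp" by (simp add: Mp_def)
    have lS: "length S = k * Mp" by (simp add: S_def length_concat_blk Mp_def)
    have sS: "set S \<subseteq> {1..k * Mp}"
    proof
      fix x assume "x \<in> set S"
      hence "x \<in> set (replicate k 1) \<or> x \<in> set (concat (map (blk k Mp) [0..<M]))" by (simp add: S_def)
      hence "x = 1 \<or> (\<exists>j<M. \<exists>a<k. x = a * Mp + j + 1)"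
      proof
        assume "x \<in> set (replicate k 1)" thus ?thesis by simp
      next
        assume "x \<in> set (concat (map (blk k Mp) [0..<M]))"
        then obtain j where j: "j < M" "x \<in> set (blk k Mp j)" by auto
        then obtain a where "a < k" "x = a * Mp + j + 1" by (auto simp: blk_def)
        thus ?thesis using j by blast
      qed
      thus "x \<in> {1..k * Mp}"
      proof
        assume "x = 1" thus ?thesis using k by (simp add: Mp_def)
      next
        assume "\<exists>j<M. \<exists>a<k. x = a * Mp + j + 1"
        then obtain j a where ja: "j < M" "a < k" "x = a * Mp + j + 1" by auto
        have "a * Mp + Mp \<le> k * Mp" using ja(2) by (metis Suc_leI add.commute mult_Suc mult_le_mono1)
        thus ?thesis using ja MMp by simp
      qed
    qed
    have nk: "real (k * Mp) / real k = real (Suc M)"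
    proof -
      have "real k > 0" using k by simp
      thus ?thesis by (simp only: of_nat_mult Mp_def) simp
    qed
    have lb: "real (LF (k - 1) (k * Mp) S) \<ge> real M / 4 * (ln (real L) - 1)"
      unfolding S_def by (rule LF_lb[OF k MMp L3 M_def])
    have num: "ln 2 / 32 * real (Suc M) * log 2 (real (Suc M)) \<le> real M / 4 * (ln (real L) - 1)"
      by (rule numeric[OF k R L_def M_def])
    have ub: "LF k (k * Mp) S \<le> 2 * (k * Mp)"
      unfolding S_def by (rule LF_ub) (use k MMp in auto)
    have opt: "OPT (k * Mp) S \<le> 5 * (k * Mp)"
      unfolding S_def by (rule OPT_ub[OF k Mp_def M1])
    have av: "avoids S (rev [1..<k + 2])" unfolding S_def by (rule avoid_S[OF k MMp])
    have "real (LF k (k * Mp) S) \<le> 5 * real (k * Mp)"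
    proof -
      have "real (LF k (k * Mp) S) \<le> real (2 * (k * Mp))" using ub by (simp only: of_nat_le_iff)
      thus ?thesis by simp
    qed
    moreover have "real (OPT (k * Mp) S) \<le> 5 * real (k * Mp)"
    proof -
      have "real (OPT (k * Mp) S) \<le> real (5 * (k * Mp))" using opt by (simp only: of_nat_le_iff)
      thus ?thesis by simp
    qed
    moreover have "real (LF (k - 1) (k * Mp) S) \<ge> ln 2 / 32 * (real (k * Mp) / real k) * log 2 (real (k * Mp) / real k)"
      unfolding nk using lb num by linarith
    ultimately show ?thesis unfolding n using lS sS av by blast
  qed
  have inj: "inj_on f {16..}"
  proof (rule inj_onI)
    fix x y assume "f x = f y"
    hence "k * Suc (2 * k * k * (2 * k * k * x)) = k * Suc (2 * k * k * (2 * k * k * y))" by (simp add: f_def)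
    hence "Suc (2 * k * k * (2 * k * k * x)) = Suc (2 * k * k * (2 * k * k * y))" using k by simp
    hence "(2 * k * k) * ((2 * k * k) * x) = (2 * k * k) * ((2 * k * k) * y)" by simp
    moreover have "2 * k * k > 0" using k by simp
    ultimately show "x = y" by simp
  qed
  have "infinite (f ` {16..})"
    using finite_imageD[OF _ inj] infinite_Ici by blast
  moreover have "f ` {16..} \<subseteq> {n::nat. \<exists>S. length S = n \<and> set S \<subseteq> {1..n} \<and>
         real (LF (k - 1) n S) \<ge> ln 2 / 32 * (real n / real k) * log 2 (real n / real k) \<and>
         real (LF k n S) \<le> 5 * real n \<and>
         avoids S (rev [1..<k + 2]) \<and>
         real (OPT n S) \<le> 5 * real n}"
    using good by auto
  ultimately show "infinite {n::nat. \<exists>S. length S = n \<and> set S \<subseteq> {1..n} \<and>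
         real (LF (k - 1) n S) \<ge> ln 2 / 32 * (real n / real k) * log 2 (real n / real k) \<and>
         real (LF k n S) \<le> 5 * real n \<and>
         avoids S (rev [1..<k + 2]) \<and>
         real (OPT n S) \<le> 5 * real n}"
    using infinite_super by blast
qed


end
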